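(* Let $R$ be a Noetherian commutative ring and let $I,J,K$ be ideals of $R$. Then there is an integer $t>0$ such that $$(J+I^nK):I = (J:I)+I^{n-1}K\quad\text{for every } n\geq t.$$
   Context: For ideals $A,B$ of $R$, $A:B=\{r\in R: rB\subseteq A\}$. *)

theory Defs
  imports "HOL-Algebra.Ideal_Product" "HOL-Algebra.Ring_Divisibility"
begin

definition ideal_colon :: "('a, 'b) ring_scheme \<Rightarrow> 'a set \<Rightarrow> 'a set \<Rightarrow> 'a set" where
  "ideal_colon R A B = {r \<in> carrier R. \<forall>b\<in>B. r \<otimes>\<^bsub>R\<^esub> b \<in> A}"

fun ideal_pow :: "('a, 'b) ring_scheme \<Rightarrow> 'a set \<Rightarrow> nat \<Rightarrow> 'a set" where
  "ideal_pow R I 0 = carrier R"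
| "ideal_pow R I (Suc n) = ideal_prod R I (ideal_pow R I n)"

end

theory Submission
  imports Defs
begin

context cring
begin

definition subr :: "'a set \<Rightarrow> bool" where
  "subr B \<longleftrightarrow> B \<subseteq> carrier R \<and> \<one> \<in> B \<and> \<zero> \<in> B \<and>
     (\<forall>x\<in>B. \<forall>y\<in>B. x \<oplus> y \<in> B \<and> x \<otimes> y \<in> B) \<and> (\<forall>x\<in>B. \<ominus> x \<in> B)"

definition sideal :: "'a set \<Rightarrow> 'a set \<Rightarrow> bool" where
  "sideal B A \<longleftrightarrow> A \<subseteq> B \<and> \<zero> \<in> A \<and> (\<forall>x\<in>A. \<forall>y\<in>A. x \<oplus> y \<in> A) \<and>
     (\<forall>r\<in>B. \<forall>x\<in>A. r \<otimes> x \<in> A)"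

definition ispan :: "'a set \<Rightarrow> 'a set \<Rightarrow> 'a set" where
  "ispan B F = {(\<Oplus>f\<in>F. c f \<otimes> f) | c. c \<in> F \<rightarrow> B}"

definition noeth :: "'a set \<Rightarrow> bool" where
  "noeth B \<longleftrightarrow> (\<forall>A. sideal B A \<longrightarrow> (\<exists>F. finite F \<and> F \<subseteq> A \<and> A \<subseteq> ispan B F))"

lemma fcong:
  assumes "\<And>i. i \<in> A \<Longrightarrow> f i = g i" "\<And>i. i \<in> A \<Longrightarrow> g i \<in> carrier R"
  shows "(\<Oplus>i\<in>A. f i) = (\<Oplus>i\<in>A. g i)"
  by (rule finsum_cong') (use assms in auto)

lemma ispanI:
  assumes "c \<in> F \<rightarrow> B" "y = (\<Oplus>f\<in>F. c f \<otimes> f)"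
  shows "y \<in> ispan B F"
  using assms unfolding ispan_def by blast

lemma subrD:
  assumes "subr B"
  shows "B \<subseteq> carrier R" "\<one> \<in> B" "\<zero> \<in> B" "x \<in> B \<Longrightarrow> y \<in> B \<Longrightarrow> x \<oplus> y \<in> B"
    "x \<in> B \<Longrightarrow> y \<in> B \<Longrightarrow> x \<otimes> y \<in> B" "x \<in> B \<Longrightarrow> \<ominus> x \<in> B"
  using assms unfolding subr_def by auto

lemma sidealD:
  assumes "sideal B A"
  shows "A \<subseteq> B" "\<zero> \<in> A" "x \<in> A \<Longrightarrow> y \<in> A \<Longrightarrow> x \<oplus> y \<in> A"
    "r \<in> B \<Longrightarrow> x \<in> A \<Longrightarrow> r \<otimes> x \<in> A"
  using assms unfolding sideal_def by auto

lemma addclosed_finsum: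
  assumes "A \<subseteq> carrier R" "\<zero> \<in> A" "\<And>x y. x \<in> A \<Longrightarrow> y \<in> A \<Longrightarrow> x \<oplus> y \<in> A"
    and "finite S" and "\<And>i. i \<in> S \<Longrightarrow> f i \<in> A"
  shows "(\<Oplus>i\<in>S. f i) \<in> A"
  using assms(4,5)
proof (induction S rule: finite_induct)
  case empty then show ?case using assms(2) by simp
next
  case (insert x F)
  have "f \<in> F \<rightarrow> carrier R" "f x \<in> carrier R" using insert assms(1) by auto
  then show ?case using insert assms(3) by (simp add: finsum_insert)
qed

lemma subr_finsum:
  assumes "subr B" "finite S" "\<And>i. i \<in> S \<Longrightarrow> f i \<in> B"
  shows "(\<Oplus>i\<in>S. f i) \<in> B"
  using addclosed_finsum[of B S f] subrD[OF assms(1)] assms(2,3) by blast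

lemma sideal_finsum:
  assumes "subr B" "sideal B A" "finite S" "\<And>i. i \<in> S \<Longrightarrow> r i \<in> B" "\<And>i. i \<in> S \<Longrightarrow> g i \<in> A"
  shows "(\<Oplus>i\<in>S. r i \<otimes> g i) \<in> A"
proof (rule addclosed_finsum)
  show "A \<subseteq> carrier R" using sidealD(1)[OF assms(2)] subrD(1)[OF assms(1)] by (rule order_trans)
  show "\<zero> \<in> A" by (rule sidealD(2)[OF assms(2)])
  show "x \<oplus> y \<in> A" if "x \<in> A" "y \<in> A" for x y by (rule sidealD(3)[OF assms(2) that])
  show "finite S" by fact
  show "r i \<otimes> g i \<in> A" if "i \<in> S" for i by (rule sidealD(4)[OF assms(2) assms(4)[OF that] assms(5)[OF that]])
qed

lemma sideal_neg:
  assumes "subr B" "sideal B A" "x \<in> A"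
  shows "\<ominus> x \<in> A"
proof -
  have xc: "x \<in> carrier R" using assms sidealD(1) subrD(1) by blast
  have "\<ominus> \<one> \<in> B" using subrD(2,6)[OF assms(1)] by blast
  then have "\<ominus> \<one> \<otimes> x \<in> A" using sidealD(4)[OF assms(2)] assms(3) by blast
  then show ?thesis using xc by (simp add: l_minus)
qed

lemma ispan_sub:
  assumes "subr B" "sideal B A" "finite F" "F \<subseteq> A"
  shows "ispan B F \<subseteq> A"
proof
  fix y assume "y \<in> ispan B F"
  then obtain c where c: "c \<in> F \<rightarrow> B" "y = (\<Oplus>f\<in>F. c f \<otimes> f)" unfolding ispan_def by blast
  show "y \<in> A" unfolding c(2)
    by (rule sideal_finsum[OF assms(1,2,3)]) (use c(1) assms(4) in auto)
qed

lemma ispan_sideal: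
  assumes "subr B" "finite F" "F \<subseteq> B"
  shows "sideal B (ispan B F)"
proof -
  have Bc: "B \<subseteq> carrier R" using subrD(1)[OF assms(1)] .
  have Fc: "F \<subseteq> carrier R" using assms(3) Bc by (rule order_trans)
  have sub: "ispan B F \<subseteq> B"
  proof
    fix y assume "y \<in> ispan B F"
    then obtain c where c: "c \<in> F \<rightarrow> B" "y = (\<Oplus>f\<in>F. c f \<otimes> f)" unfolding ispan_def by blast
    show "y \<in> B" unfolding c(2)
      by (rule subr_finsum[OF assms(1) assms(2)], rule subrD(5)[OF assms(1)]) (use c(1) assms(3) in auto)
  qed
  have zero: "\<zero> \<in> ispan B F"
  proof -
    have "(\<Oplus>f\<in>F. (\<lambda>_. \<zero>) f \<otimes> f) = (\<Oplus>f\<in>F. \<zero>)"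
      using Fc by (intro fcong) (auto dest: subsetD)
    also have "\<dots> = \<zero>" by simp
    finally have "\<zero> = (\<Oplus>f\<in>F. (\<lambda>_. \<zero>) f \<otimes> f)" by simp
    moreover have "(\<lambda>_. \<zero>) \<in> F \<rightarrow> B" using subrD(3)[OF assms(1)] by simp
    ultimately show ?thesis by (intro ispanI[where c="\<lambda>_. \<zero>"]) auto
  qed
  have add: "x \<oplus> y \<in> ispan B F" if H: "x \<in> ispan B F" "y \<in> ispan B F" for x y
  proof -
    obtain c where c: "c \<in> F \<rightarrow> B" "x = (\<Oplus>f\<in>F. c f \<otimes> f)" using H(1) unfolding ispan_def by blast
    obtain d where d: "d \<in> F \<rightarrow> B" "y = (\<Oplus>f\<in>F. d f \<otimes> f)" using H(2) unfolding ispan_def by blast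
    have cc: "c f \<in> carrier R" "d f \<in> carrier R" "f \<in> carrier R" if "f \<in> F" for f
      using c(1) d(1) Bc Fc that by auto
    have "x \<oplus> y = (\<Oplus>f\<in>F. c f \<otimes> f \<oplus> d f \<otimes> f)"
      unfolding c(2) d(2) by (rule finsum_addf[symmetric]) (auto simp: cc)
    also have "\<dots> = (\<Oplus>f\<in>F. (c f \<oplus> d f) \<otimes> f)"
      by (intro fcong) (auto simp: l_distr cc)
    finally have "x \<oplus> y = (\<Oplus>f\<in>F. (\<lambda>f. c f \<oplus> d f) f \<otimes> f)" .
    moreover have "(\<lambda>f. c f \<oplus> d f) \<in> F \<rightarrow> B" using c(1) d(1) subrD(4)[OF assms(1)] by auto
    ultimately show ?thesis by (intro ispanI[where c="\<lambda>f. c f \<oplus> d f"]) auto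
  qed
  have mul: "r \<otimes> x \<in> ispan B F" if that: "r \<in> B" "x \<in> ispan B F" for r x
  proof -
    note H = that
    obtain c where c: "c \<in> F \<rightarrow> B" "x = (\<Oplus>f\<in>F. c f \<otimes> f)" using H(2) unfolding ispan_def by blast
    have cc: "c f \<in> carrier R" "f \<in> carrier R" if "f \<in> F" for f
      using c(1) Bc Fc that by auto
    have rc: "r \<in> carrier R" using that(1) Bc by auto
    have "r \<otimes> x = (\<Oplus>f\<in>F. r \<otimes> (c f \<otimes> f))"
      unfolding c(2) by (rule finsum_rdistr) (auto simp: cc rc assms(2))
    also have "\<dots> = (\<Oplus>f\<in>F. (r \<otimes> c f) \<otimes> f)"
      by (intro fcong) (auto simp: m_assoc cc rc)
    finally have "r \<otimes> x = (\<Oplus>f\<in>F. (\<lambda>f. r \<otimes> c f) f \<otimes> f)" .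
    moreover have "(\<lambda>f. r \<otimes> c f) \<in> F \<rightarrow> B" using c(1) that(1) subrD(5)[OF assms(1)] by auto
    ultimately show ?thesis by (intro ispanI[where c="\<lambda>f. r \<otimes> c f"]) auto
  qed
  show ?thesis unfolding sideal_def using sub zero add mul by blast
qed

lemma ispan_self:
  assumes "subr B" "finite F" "F \<subseteq> B" "f \<in> F"
  shows "f \<in> ispan B F"
proof -
  have Fc: "F \<subseteq> carrier R" using assms(3) subrD(1)[OF assms(1)] by (rule order_trans)
  have "(\<Oplus>g\<in>F. (\<lambda>g. if g = f then \<one> else \<zero>) g \<otimes> g) = (\<Oplus>g\<in>F. if f = g then (\<lambda>g. g) g else \<zero>)"
    using Fc by (intro fcong) (auto dest: subsetD)
  also have "\<dots> = f" using finsum_singleton[of f F "\<lambda>g. g"] assms(2,4) Fc by auto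
  finally have "f = (\<Oplus>g\<in>F. (\<lambda>g. if g = f then \<one> else \<zero>) g \<otimes> g)" by simp
  moreover have "(\<lambda>g. if g = f then \<one> else \<zero>) \<in> F \<rightarrow> B" using subrD(2,3)[OF assms(1)] by auto
  ultimately show ?thesis by (intro ispanI[where c="\<lambda>g. if g = f then \<one> else \<zero>"]) auto
qed

lemma noeth_acc:
  assumes "subr B" "noeth B" "\<And>d. sideal B (L d)" "\<And>d. L d \<subseteq> L (Suc d)"
  shows "\<exists>D. \<forall>d\<ge>D. L d = L D"
proof -
  have mono: "L d \<subseteq> L d'" if "d \<le> d'" for d d'
    using lift_Suc_mono_le[of L, OF assms(4) that] .
  let ?U = "\<Union>d. L d"
  have "sideal B ?U"
    unfolding sideal_def
  proof (intro conjI ballI)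
    show "?U \<subseteq> B" using sidealD(1)[OF assms(3)] by blast
    show "\<zero> \<in> ?U" using sidealD(2)[OF assms(3)] by blast
    show "r \<otimes> x \<in> ?U" if "r \<in> B" "x \<in> ?U" for r x
      using that sidealD(4)[OF assms(3)] by blast
    show "x \<oplus> y \<in> ?U" if xy: "x \<in> ?U" "y \<in> ?U" for x y
    proof -
      obtain d1 d2 where "x \<in> L d1" "y \<in> L d2" using xy by blast
      then have "x \<in> L (max d1 d2)" "y \<in> L (max d1 d2)" using mono[of d1 "max d1 d2"] mono[of d2 "max d1 d2"] by auto
      then show ?thesis using sidealD(3)[OF assms(3)] by blast
    qed
  qed
  then obtain F where F: "finite F" "F \<subseteq> ?U" "?U \<subseteq> ispan B F" using assms(2) unfolding noeth_def by blast
  have "\<forall>f\<in>F. \<exists>d. f \<in> L d" using F(2) by blast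
  then obtain k where k: "\<And>f. f \<in> F \<Longrightarrow> f \<in> L (k f)" by metis
  define D where "D = Max (k ` F \<union> {0})"
  have "F \<subseteq> L D"
  proof
    fix f assume f: "f \<in> F"
    then have "k f \<le> D" unfolding D_def using F(1) by simp
    then show "f \<in> L D" using mono[of "k f" D] k[OF f] by blast
  qed
  then have "ispan B F \<subseteq> L D" using ispan_sub[OF assms(1) assms(3) F(1)] by blast
  then have "L d \<subseteq> L D" for d using F(3) by blast
  then show ?thesis using mono by blast
qed

end

context cring
begin

definition rep :: "(nat \<Rightarrow> 'a) \<Rightarrow> 'a \<Rightarrow> nat \<Rightarrow> 'a" where
  "rep c x n = (\<Oplus>i\<in>{..<n}. c i \<otimes> x [^] i)"

definition ext :: "'a set \<Rightarrow> 'a \<Rightarrow> 'a set" where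
  "ext B x = {y. \<exists>c n. (\<forall>i. c i \<in> B) \<and> y = rep c x n}"

lemma rep_closed:
  assumes "x \<in> carrier R" "\<And>i. c i \<in> carrier R"
  shows "rep c x n \<in> carrier R"
  unfolding rep_def using assms by (intro finsum_closed) auto

lemma rep_0 [simp]: "rep c x 0 = \<zero>"
  unfolding rep_def by simp

lemma rep_Suc:
  assumes "x \<in> carrier R" "\<And>i. c i \<in> carrier R"
  shows "rep c x (Suc n) = rep c x n \<oplus> c n \<otimes> x [^] n"
proof -
  have "rep c x (Suc n) = c n \<otimes> x [^] n \<oplus> rep c x n"
    unfolding rep_def lessThan_Suc using assms by (subst finsum_insert) auto
  then show ?thesis using assms rep_closed[OF assms] by (simp add: a_comm)
qed

lemma rep_add:
  assumes "x \<in> carrier R" "\<And>i. c i \<in> carrier R" "\<And>i. d i \<in> carrier R"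
  shows "rep (\<lambda>i. c i \<oplus> d i) x n = rep c x n \<oplus> rep d x n"
proof (induction n)
  case 0 then show ?case by simp
next
  case (Suc n)
  have cd: "\<And>i. c i \<oplus> d i \<in> carrier R" using assms by auto
  have A: "rep c x n \<in> carrier R" "rep d x n \<in> carrier R" using rep_closed assms by auto
  have B: "c n \<otimes> x [^] n \<in> carrier R" "d n \<otimes> x [^] n \<in> carrier R" using assms by auto
  show ?case
    unfolding rep_Suc[OF assms(1) cd] rep_Suc[OF assms(1,2)] rep_Suc[OF assms(1,3)] Suc
    using A B assms by (simp add: l_distr a_ac)
qed

lemma rep_smult:
  assumes "x \<in> carrier R" "\<And>i. c i \<in> carrier R" "r \<in> carrier R"
  shows "r \<otimes> rep c x n = rep (\<lambda>i. r \<otimes> c i) x n"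
proof (induction n)
  case 0 then show ?case using assms by simp
next
  case (Suc n)
  have rc: "\<And>i. r \<otimes> c i \<in> carrier R" using assms by auto
  have A: "rep c x n \<in> carrier R" using rep_closed assms by auto
  show ?case
    unfolding rep_Suc[OF assms(1) rc] rep_Suc[OF assms(1,2)] Suc[symmetric]
    using A assms by (simp add: r_distr m_assoc)
qed

lemma rep_zero_coeffs:
  assumes "x \<in> carrier R" "\<And>i. i < n \<Longrightarrow> c i = \<zero>"
  shows "rep c x n = \<zero>"
proof -
  have "rep c x n = (\<Oplus>i\<in>{..<n}. \<zero>)" unfolding rep_def using assms by (intro fcong) auto
  then show ?thesis by simp
qed

lemma rep_cong:
  assumes "x \<in> carrier R" "\<And>i. d i \<in> carrier R" "\<And>i. i < n \<Longrightarrow> c i = d i"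
  shows "rep c x n = rep d x n"
  unfolding rep_def using assms by (intro fcong) auto

lemma rep_shift:
  assumes "x \<in> carrier R" "\<And>i. c i \<in> carrier R"
  shows "rep (\<lambda>i. if i < k then \<zero> else c (i - k)) x (n + k) = x [^] k \<otimes> rep c x n"
proof (induction n)
  case 0
  have "rep (\<lambda>i. if i < k then \<zero> else c (i - k)) x (0 + k) = \<zero>"
    using assms by (intro rep_zero_coeffs) auto
  then show ?case using assms by simp
next
  case (Suc n)
  have cc: "\<And>i. (if i < k then \<zero> else c (i - k)) \<in> carrier R" using assms by auto
  have A: "rep c x n \<in> carrier R" using rep_closed assms by auto
  have "rep (\<lambda>i. if i < k then \<zero> else c (i - k)) x (Suc n + k)
      = rep (\<lambda>i. if i < k then \<zero> else c (i - k)) x (n + k) \<oplus> c n \<otimes> x [^] (n + k)"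
    using rep_Suc[OF assms(1) cc, where n="n + k"] by simp
  also have "\<dots> = x [^] k \<otimes> rep c x n \<oplus> c n \<otimes> x [^] (n + k)" using Suc by simp
  also have "\<dots> = x [^] k \<otimes> (rep c x n \<oplus> c n \<otimes> x [^] n)"
  proof -
    have "c n \<otimes> x [^] (n + k) = x [^] k \<otimes> (c n \<otimes> x [^] n)"
      using assms by (simp add: nat_pow_mult[symmetric] m_ac)
    then show ?thesis using assms A by (simp add: r_distr)
  qed
  also have "\<dots> = x [^] k \<otimes> rep c x (Suc n)" using rep_Suc[OF assms] by simp
  finally show ?case .
qed

lemma rep_finsum:
  assumes "x \<in> carrier R" "finite A" "\<And>a i. cf a i \<in> carrier R"
  shows "(\<Oplus>a\<in>A. rep (cf a) x n) = rep (\<lambda>i. \<Oplus>a\<in>A. cf a i) x n"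
  using assms(2)
proof (induction A rule: finite_induct)
  case empty
  then show ?case using assms(1) by (simp add: rep_zero_coeffs)
next
  case (insert a F)
  have c1: "\<And>i. (\<Oplus>a\<in>F. cf a i) \<in> carrier R" using assms(3) by (intro finsum_closed) auto
  have "(\<Oplus>a\<in>insert a F. rep (cf a) x n) = rep (cf a) x n \<oplus> (\<Oplus>a\<in>F. rep (cf a) x n)"
    using insert assms rep_closed by (subst finsum_insert) auto
  also have "\<dots> = rep (cf a) x n \<oplus> rep (\<lambda>i. \<Oplus>a\<in>F. cf a i) x n" using insert by simp
  also have "\<dots> = rep (\<lambda>i. cf a i \<oplus> (\<Oplus>a\<in>F. cf a i)) x n"
    using rep_add[OF assms(1) assms(3) c1] by simp
  also have "\<dots> = rep (\<lambda>i. \<Oplus>a\<in>insert a F. cf a i) x n"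
    using insert assms by (intro rep_cong) (auto intro!: finsum_closed simp: finsum_insert)
  finally show ?case .
qed

lemma rep_extend:
  assumes "x \<in> carrier R" "\<And>i. c i \<in> carrier R" "n \<le> m"
  shows "rep (\<lambda>i. if i < n then c i else \<zero>) x m = rep c x n"
  using assms(3)
proof (induction m rule: dec_induct)
  case base
  then show ?case using assms by (intro rep_cong) auto
next
  case (step m)
  have cc: "\<And>i. (if i < n then c i else \<zero>) \<in> carrier R" using assms by auto
  show ?case using rep_Suc[OF assms(1) cc, where n=m] step assms rep_closed[OF assms(1,2)] by simp
qed

end

context cring
begin

lemma extI:
  assumes "\<And>i. c i \<in> B" "y = rep c x n"
  shows "y \<in> ext B x"
  using assms unfolding ext_def by blast

lemma extE:
  assumes "y \<in> ext B x"
  obtains c n where "\<forall>i. c i \<in> B" "y = rep c x n"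
  using assms unfolding ext_def by blast

context
  fixes B x
  assumes sB: "subr B" and xc: "x \<in> carrier R"
begin

lemma Bc: "b \<in> B \<Longrightarrow> b \<in> carrier R"
  using subrD(1)[OF sB] by blast

lemma ext_carrier: "y \<in> ext B x \<Longrightarrow> y \<in> carrier R"
  by (erule extE) (use rep_closed[OF xc] Bc in auto)

lemma B_ext: "b \<in> B \<Longrightarrow> b \<in> ext B x"
proof -
  assume b: "b \<in> B"
  have "rep (\<lambda>i. b) x 1 = b"
    using rep_Suc[OF xc, of "\<lambda>i. b" 0] Bc[OF b] xc by simp
  then show ?thesis using b by (intro extI[where c="\<lambda>i. b" and n=1]) auto
qed

lemma x_ext: "x \<in> ext B x"
proof -
  let ?c = "\<lambda>i::nat. if i = 1 then \<one> else \<zero>"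
  have cc: "\<And>i. ?c i \<in> carrier R" by auto
  have "rep ?c x 2 = x"
    using rep_Suc[OF xc cc, where n=1] rep_Suc[OF xc cc, where n=0] xc
    by (simp add: numeral_2_eq_2)
  then show ?thesis using subrD(2,3)[OF sB] by (intro extI[where c="?c" and n=2]) auto
qed

lemma ext_add:
  assumes "y \<in> ext B x" "z \<in> ext B x"
  shows "y \<oplus> z \<in> ext B x"
proof -
  obtain c n where c: "\<forall>i. c i \<in> B" "y = rep c x n" using assms(1) by (rule extE)
  obtain d m where d: "\<forall>i. d i \<in> B" "z = rep d x m" using assms(2) by (rule extE)
  let ?N = "max n m"
  let ?c = "\<lambda>i. if i < n then c i else \<zero>"
  let ?d = "\<lambda>i. if i < m then d i else \<zero>"
  have cc: "\<And>i. c i \<in> carrier R" "\<And>i. d i \<in> carrier R" using c d Bc by auto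
  have cc2: "\<And>i. ?c i \<in> carrier R" "\<And>i. ?d i \<in> carrier R" using cc by auto
  have "y = rep ?c x ?N" using rep_extend[OF xc cc(1), of n ?N] c(2) by simp
  moreover have "z = rep ?d x ?N" using rep_extend[OF xc cc(2), of m ?N] d(2) by simp
  ultimately have "y \<oplus> z = rep (\<lambda>i. ?c i \<oplus> ?d i) x ?N"
    using rep_add[OF xc cc2] by simp
  moreover have "\<And>i. ?c i \<oplus> ?d i \<in> B" using c(1) d(1) subrD(3,4)[OF sB] by auto
  ultimately show ?thesis by (intro extI[where c="\<lambda>i. ?c i \<oplus> ?d i" and n="?N"]) auto
qed

lemma ext_smult:
  assumes "r \<in> B" "y \<in> ext B x"
  shows "r \<otimes> y \<in> ext B x"
proof -
  obtain c n where c: "\<forall>i. c i \<in> B" "y = rep c x n" using assms(2) by (rule extE)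
  have cc: "\<And>i. c i \<in> carrier R" using c Bc by auto
  have "r \<otimes> y = rep (\<lambda>i. r \<otimes> c i) x n" using rep_smult[OF xc cc Bc[OF assms(1)]] c(2) by simp
  moreover have "\<And>i. r \<otimes> c i \<in> B" using c(1) assms(1) subrD(5)[OF sB] by auto
  ultimately show ?thesis by (intro extI[where c="\<lambda>i. r \<otimes> c i" and n=n]) auto
qed

lemma ext_mult:
  assumes "y \<in> ext B x" "z \<in> ext B x"
  shows "y \<otimes> z \<in> ext B x"
proof -
  obtain c n where c: "\<forall>i. c i \<in> B" "y = rep c x n" using assms(1) by (rule extE)
  obtain d m where d: "\<forall>i. d i \<in> B" "z = rep d x m" using assms(2) by (rule extE)
  have cc: "\<And>i. c i \<in> carrier R" "\<And>i. d i \<in> carrier R" using c d Bc by auto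
  have zc: "z \<in> carrier R" using d(2) rep_closed[OF xc cc(2)] by simp
  define e where "e = (\<lambda>k j. if j < m + k then c k \<otimes> (if j < k then \<zero> else d (j - k)) else \<zero>)"
  have ec: "\<And>k j. e k j \<in> carrier R" unfolding e_def using cc by auto
  have eB: "\<And>k j. e k j \<in> B" unfolding e_def using c(1) d(1) subrD(3,5)[OF sB] by auto
  have "y \<otimes> z = (\<Oplus>k\<in>{..<n}. (c k \<otimes> x [^] k) \<otimes> z)"
    unfolding c(2) rep_def using cc xc zc by (intro finsum_ldistr) auto
  also have "\<dots> = (\<Oplus>k\<in>{..<n}. rep (e k) x (n + m))"
  proof (rule fcong)
    fix k assume k: "k \<in> {..<n}"
    have dd: "\<And>j. (if j < k then \<zero> else d (j - k)) \<in> carrier R" using cc by auto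
    have "(c k \<otimes> x [^] k) \<otimes> z = c k \<otimes> (x [^] k \<otimes> rep d x m)"
      using cc xc zc d(2) by (simp add: m_assoc)
    also have "\<dots> = c k \<otimes> rep (\<lambda>j. if j < k then \<zero> else d (j - k)) x (m + k)"
      using rep_shift[where c=d and k=k and n=m, OF xc cc(2)] by simp
    also have "\<dots> = rep (\<lambda>j. c k \<otimes> (if j < k then \<zero> else d (j - k))) x (m + k)"
      using rep_smult[where c="\<lambda>j. if j < k then \<zero> else d (j - k)" and r="c k", OF xc dd cc(1)] by simp
    also have "\<dots> = rep (e k) x (n + m)"
      unfolding e_def using rep_extend[OF xc, of "\<lambda>j. c k \<otimes> (if j < k then \<zero> else d (j - k))" "m + k" "n + m"] k cc
      by auto
    finally show "(c k \<otimes> x [^] k) \<otimes> z = rep (e k) x (n + m)" .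
    show "rep (e k) x (n + m) \<in> carrier R" using rep_closed[OF xc ec] by simp
  qed
  also have "\<dots> = rep (\<lambda>j. \<Oplus>k\<in>{..<n}. e k j) x (n + m)"
    using rep_finsum[where cf=e and A="{..<n}" and n="n+m", OF xc _ ec] by simp
  finally have "y \<otimes> z = rep (\<lambda>j. \<Oplus>k\<in>{..<n}. e k j) x (n + m)" .
  moreover have "\<And>j. (\<Oplus>k\<in>{..<n}. e k j) \<in> B" by (rule subr_finsum[OF sB]) (auto simp: eB)
  ultimately show ?thesis by (intro extI[where c="\<lambda>j. \<Oplus>k\<in>{..<n}. e k j" and n="n+m"]) auto
qed

lemma subr_ext: "subr (ext B x)"
proof -
  have "\<ominus> y \<in> ext B x" if "y \<in> ext B x" for y
  proof -
    have "\<ominus> \<one> \<in> B" using subrD(2,6)[OF sB] by blast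
    then have "\<ominus> \<one> \<otimes> y \<in> ext B x" using ext_smult that by blast
    then show ?thesis using ext_carrier[OF that] by (simp add: l_minus)
  qed
  then show ?thesis unfolding subr_def
    using ext_carrier B_ext subrD(2,3)[OF sB] ext_add ext_mult by blast
qed

lemma ext_min:
  assumes "subr C" "B \<subseteq> C" "x \<in> C"
  shows "ext B x \<subseteq> C"
proof
  fix y assume "y \<in> ext B x"
  then obtain c n where c: "\<forall>i. c i \<in> B" "y = rep c x n" by (rule extE)
  have pw: "x [^] (i::nat) \<in> C" for i
  proof (induction i)
    case 0 then show ?case using subrD(2)[OF assms(1)] by simp
  next
    case (Suc i) then show ?case using subrD(5)[OF assms(1)] assms(3) by simp
  qed
  show "y \<in> C" unfolding c(2) rep_def
  proof (rule subr_finsum[OF assms(1)])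
    fix i assume "i \<in> {..<n}"
    have "c i \<in> C" using c(1) assms(2) by blast
    then show "c i \<otimes> x [^] i \<in> C" using pw subrD(5)[OF assms(1)] by blast
  qed simp
qed

end

end

context cring
begin

lemma pow_in_subr:
  assumes "subr C" "x \<in> C"
  shows "x [^] (k::nat) \<in> C"
proof (induction k)
  case 0 then show ?case using subrD(2)[OF assms(1)] by simp
next
  case (Suc k) then show ?case using subrD(5)[OF assms(1)] assms(2) by simp
qed

lemma noeth_ext:
  assumes sB: "subr B" and nB: "noeth B" and xc: "x \<in> carrier R"
  shows "noeth (ext B x)"
  unfolding noeth_def
proof (intro allI impI)
  fix A assume A: "sideal (ext B x) A"
  have sE: "subr (ext B x)" by (rule subr_ext[OF sB xc])
  have Bc: "\<And>b. b \<in> B \<Longrightarrow> b \<in> carrier R" using subrD(1)[OF sB] by blast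
  have AE: "A \<subseteq> ext B x" using sidealD(1)[OF A] .
  have xE: "x \<in> ext B x" by (rule x_ext[OF sB xc])
  define L where "L d = {b. \<exists>c. (\<forall>i. c i \<in> B) \<and> rep c x (Suc d) \<in> A \<and> b = c d}" for d
  have LI: "b \<in> L d" if "\<forall>i. c i \<in> B" "rep c x (Suc d) \<in> A" "b = c d" for b c d
    using that unfolding L_def by blast
  have Lid: "sideal B (L d)" for d
    unfolding sideal_def
  proof (intro conjI ballI)
    show "L d \<subseteq> B" unfolding L_def by blast
    show "\<zero> \<in> L d"
    proof (rule LI[where c="\<lambda>_. \<zero>"])
      show "\<forall>i. (\<lambda>_. \<zero>) i \<in> B" using subrD(3)[OF sB] by simp
      show "rep (\<lambda>_. \<zero>) x (Suc d) \<in> A" using rep_zero_coeffs[OF xc] sidealD(2)[OF A] by simp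
    qed simp
    show "u \<oplus> v \<in> L d" if H: "u \<in> L d" "v \<in> L d" for u v
    proof -
      obtain c1 where c1: "\<forall>i. c1 i \<in> B" "rep c1 x (Suc d) \<in> A" "u = c1 d" using H(1) unfolding L_def by blast
      obtain c2 where c2: "\<forall>i. c2 i \<in> B" "rep c2 x (Suc d) \<in> A" "v = c2 d" using H(2) unfolding L_def by blast
      have cc: "\<And>i. c1 i \<in> carrier R" "\<And>i. c2 i \<in> carrier R" using c1 c2 Bc by auto
      show ?thesis
      proof (rule LI[where c="\<lambda>i. c1 i \<oplus> c2 i"])
        show "\<forall>i. c1 i \<oplus> c2 i \<in> B" using c1(1) c2(1) subrD(4)[OF sB] by blast
        show "rep (\<lambda>i. c1 i \<oplus> c2 i) x (Suc d) \<in> A"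
          unfolding rep_add[OF xc cc] using c1(2) c2(2) sidealD(3)[OF A] by blast
      qed (simp add: c1 c2)
    qed
    show "r \<otimes> u \<in> L d" if H: "r \<in> B" "u \<in> L d" for r u
    proof -
      obtain c1 where c1: "\<forall>i. c1 i \<in> B" "rep c1 x (Suc d) \<in> A" "u = c1 d" using H(2) unfolding L_def by blast
      have cc: "\<And>i. c1 i \<in> carrier R" using c1 Bc by auto
      show ?thesis
      proof (rule LI[where c="\<lambda>i. r \<otimes> c1 i"])
        show "\<forall>i. r \<otimes> c1 i \<in> B" using c1(1) H(1) subrD(5)[OF sB] by blast
        have "r \<in> ext B x" using B_ext[OF sB xc H(1)] .
        then show "rep (\<lambda>i. r \<otimes> c1 i) x (Suc d) \<in> A"
          unfolding rep_smult[OF xc cc Bc[OF H(1)], symmetric] using c1(2) sidealD(4)[OF A] by blast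
      qed (simp add: c1)
    qed
  qed
  have Lmono: "L d \<subseteq> L (Suc d)" for d
  proof
    fix b assume "b \<in> L d"
    then obtain c where c: "\<forall>i. c i \<in> B" "rep c x (Suc d) \<in> A" "b = c d" unfolding L_def by blast
    have cc: "\<And>i. c i \<in> carrier R" using c Bc by auto
    let ?c = "\<lambda>i. if i < 1 then \<zero> else c (i - 1)"
    show "b \<in> L (Suc d)"
    proof (rule LI[where c="?c"])
      show "\<forall>i. ?c i \<in> B" using c(1) subrD(3)[OF sB] by simp
      have "rep ?c x (Suc (Suc d)) = x [^] (1::nat) \<otimes> rep c x (Suc d)"
        using rep_shift[where c=c and k=1 and n="Suc d", OF xc cc] by simp
      also have "\<dots> = x \<otimes> rep c x (Suc d)" using xc by simp
      finally show "rep ?c x (Suc (Suc d)) \<in> A" using c(2) sidealD(4)[OF A xE] by simp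
    qed (simp add: c)
  qed
  obtain D where D: "\<And>d. d \<ge> D \<Longrightarrow> L d = L D"
    using noeth_acc[where L=L, OF sB nB Lid Lmono] by blast
  have Lmin: "L d = L (min d D)" for d
    using D[of d] by (cases "d \<le> D") auto
  have "\<forall>d. \<exists>F. finite F \<and> F \<subseteq> L d \<and> L d \<subseteq> ispan B F"
    using nB Lid unfolding noeth_def by blast
  then obtain FF where FF: "\<And>d. finite (FF d)" "\<And>d. FF d \<subseteq> L d" "\<And>d. L d \<subseteq> ispan B (FF d)"
    by metis
  define W where "W d f = (SOME c. (\<forall>i. c i \<in> B) \<and> rep c x (Suc d) \<in> A \<and> f = c d)" for d f
  have W: "(\<forall>i. W d f i \<in> B) \<and> rep (W d f) x (Suc d) \<in> A \<and> f = W d f d" if "f \<in> FF d" for d f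
  proof -
    have "\<exists>c. (\<forall>i. c i \<in> B) \<and> rep c x (Suc d) \<in> A \<and> f = c d"
      using FF(2)[of d] that unfolding L_def by blast
    then show ?thesis unfolding W_def by (rule someI_ex)
  qed
  define g where "g d f = rep (W d f) x (Suc d)" for d f
  define G where "G = (\<lambda>(d, f). g d f) ` (SIGMA d:{..D}. FF d)"
  have finG: "finite G" unfolding G_def using FF(1) by auto
  have GA: "G \<subseteq> A" unfolding G_def g_def using W by auto
  have GE: "G \<subseteq> ext B x" using GA AE by blast
  have gG: "g d f \<in> G" if "d \<le> D" "f \<in> FF d" for d f
    unfolding G_def using that by force
  let ?S = "ispan (ext B x) G"
  have sS: "sideal (ext B x) ?S" by (rule ispan_sideal[OF sE finG GE])
  have claim: "\<forall>c. (\<forall>i. c i \<in> B) \<longrightarrow> rep c x n \<in> A \<longrightarrow> rep c x n \<in> ?S" for n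
  proof (induction n)
    case 0 then show ?case using sidealD(2)[OF sS] by simp
  next
    case (Suc d)
    show ?case
    proof (intro allI impI)
      fix c assume c: "\<forall>i. c i \<in> B" "rep c x (Suc d) \<in> A"
      have cc: "\<And>i. c i \<in> carrier R" using c Bc by auto
      define d' where "d' = min d D"
      define k where "k = d - d'"
      have d'D: "d' \<le> D" unfolding d'_def by simp
      have kd: "d = d' + k" unfolding k_def d'_def by simp
      have "c d \<in> L d" using LI[OF c refl] .
      then have "c d \<in> L d'" using Lmin[of d] unfolding d'_def by simp
      then have "c d \<in> ispan B (FF d')" using FF(3) by blast
      then obtain e where e: "e \<in> FF d' \<rightarrow> B" "c d = (\<Oplus>f\<in>FF d'. e f \<otimes> f)"
        unfolding ispan_def by blast
      have WB: "\<And>f i. f \<in> FF d' \<Longrightarrow> W d' f i \<in> B" using W by blast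
      have Wc: "\<And>f i. f \<in> FF d' \<Longrightarrow> W d' f i \<in> carrier R" using WB Bc by blast
      have ec: "\<And>f. f \<in> FF d' \<Longrightarrow> e f \<in> carrier R" using e(1) Bc by blast
      have FFc: "\<And>f. f \<in> FF d' \<Longrightarrow> f \<in> carrier R" using FF(2) Lid sidealD(1) Bc by blast
      define sh where "sh f i = e f \<otimes> (if i < k then \<zero> else W d' f (i - k))" for f i
      define cq where "cq i = (\<Oplus>f\<in>FF d'. sh f i)" for i
      define cq' where "cq' f i = (if f \<in> FF d' then sh f i else \<zero>)" for f i
      have shB: "sh f i \<in> B" if f: "f \<in> FF d'" for f i
      proof -
        have "e f \<in> B" using e(1) f by blast
        moreover have "(if i < k then \<zero> else W d' f (i - k)) \<in> B" using WB[OF f] subrD(3)[OF sB] by simp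
        ultimately show ?thesis unfolding sh_def by (rule subrD(5)[OF sB])
      qed
      have cq'c: "\<And>f i. cq' f i \<in> carrier R" unfolding cq'_def using shB Bc by auto
      have cqB: "\<And>i. cq i \<in> B" unfolding cq_def by (rule subr_finsum[OF sB FF(1)]) (rule shB)
      have cqc: "\<And>i. cq i \<in> carrier R" using cqB Bc by blast
      define q where "q = rep cq x (Suc d)"
      have qc: "q \<in> carrier R" unfolding q_def using rep_closed[OF xc cqc] .
      have xk: "x [^] k \<in> ext B x" using pow_in_subr[OF sE xE] .
      have xkc: "x [^] k \<in> carrier R" using xc by simp
      have q_eq: "q = (\<Oplus>f\<in>FF d'. (e f \<otimes> x [^] k) \<otimes> g d' f)"
      proof -
        have "(\<Oplus>f\<in>FF d'. (e f \<otimes> x [^] k) \<otimes> g d' f) = (\<Oplus>f\<in>FF d'. rep (cq' f) x (Suc d))"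
        proof (rule fcong)
          fix f assume f: "f \<in> FF d'"
          have Wcc: "\<And>i. W d' f i \<in> carrier R" using Wc[OF f] .
          have shc: "\<And>i. (if i < k then \<zero> else W d' f (i - k)) \<in> carrier R" using Wcc by auto
          have gc: "g d' f \<in> carrier R" unfolding g_def using rep_closed[OF xc Wcc] .
          have "(e f \<otimes> x [^] k) \<otimes> g d' f = e f \<otimes> (x [^] k \<otimes> g d' f)"
            using ec[OF f] xkc gc by (simp add: m_assoc)
          also have "\<dots> = e f \<otimes> rep (\<lambda>i. if i < k then \<zero> else W d' f (i - k)) x (Suc d' + k)"
            unfolding g_def using rep_shift[where c="W d' f" and k=k and n="Suc d'", OF xc Wcc] by simp
          also have "\<dots> = rep (sh f) x (Suc d' + k)"
            unfolding sh_def using rep_smult[OF xc shc ec[OF f]] by simp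
          also have "\<dots> = rep (cq' f) x (Suc d)"
            using kd f unfolding cq'_def by simp
          finally show "(e f \<otimes> x [^] k) \<otimes> g d' f = rep (cq' f) x (Suc d)" .
          show "rep (cq' f) x (Suc d) \<in> carrier R" using rep_closed[OF xc cq'c] .
        qed
        also have "\<dots> = rep (\<lambda>i. \<Oplus>f\<in>FF d'. cq' f i) x (Suc d)"
          using rep_finsum[where cf=cq' and A="FF d'" and n="Suc d", OF xc FF(1) cq'c] .
        also have "\<dots> = q"
          unfolding q_def cq_def cq'_def
          by (intro rep_cong[OF xc]) (auto intro!: fcong finsum_closed simp: shB Bc)
        finally show ?thesis by simp
      qed
      have coefE: "\<And>f. f \<in> FF d' \<Longrightarrow> e f \<otimes> x [^] k \<in> ext B x"
        using e(1) B_ext[OF sB xc] xk subrD(5)[OF sE] by blast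
      have gS: "\<And>f. f \<in> FF d' \<Longrightarrow> g d' f \<in> ?S"
        using gG[OF d'D] ispan_self[OF sE finG GE] by blast
      have gA: "\<And>f. f \<in> FF d' \<Longrightarrow> g d' f \<in> A"
        using gG[OF d'D] GA by blast
      have qS: "q \<in> ?S" unfolding q_eq
        by (rule sideal_finsum[OF sE sS FF(1)]) (auto simp: coefE gS)
      have qA: "q \<in> A" unfolding q_eq
        by (rule sideal_finsum[OF sE A FF(1)]) (auto simp: coefE gA)
      have cqd: "cq d = c d"
      proof -
        have "cq d = (\<Oplus>f\<in>FF d'. e f \<otimes> f)"
          unfolding cq_def sh_def
        proof (rule fcong)
          fix f assume f: "f \<in> FF d'"
          have "d - k = d'" using kd by simp
          then show "e f \<otimes> (if d < k then \<zero> else W d' f (d - k)) = e f \<otimes> f"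
            using W[OF f] kd by auto
          show "e f \<otimes> f \<in> carrier R" using ec[OF f] FFc[OF f] by simp
        qed
        then show ?thesis using e(2) by simp
      qed
      define c2 where "c2 i = c i \<oplus> \<ominus> \<one> \<otimes> cq i" for i
      have c2B: "\<forall>i. c2 i \<in> B"
        unfolding c2_def using c(1) cqB subrD(2,4,5,6)[OF sB] by blast
      have c2c: "\<And>i. c2 i \<in> carrier R" using c2B Bc by blast
      have mcq: "\<And>i. \<ominus> \<one> \<otimes> cq i \<in> carrier R" using cqc by simp
      have rc2: "rep c2 x (Suc d) = rep c x (Suc d) \<oplus> \<ominus> q"
      proof -
        have "rep c2 x (Suc d) = rep c x (Suc d) \<oplus> rep (\<lambda>i. \<ominus> \<one> \<otimes> cq i) x (Suc d)"
          unfolding c2_def by (rule rep_add[OF xc cc mcq])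
        also have "rep (\<lambda>i. \<ominus> \<one> \<otimes> cq i) x (Suc d) = \<ominus> \<one> \<otimes> q"
          unfolding q_def by (rule rep_smult[OF xc cqc, symmetric]) simp
        also have "\<ominus> \<one> \<otimes> q = \<ominus> q" using qc by (simp add: l_minus)
        finally show ?thesis .
      qed
      have rcA: "rep c x (Suc d) \<in> carrier R" using rep_closed[OF xc cc] .
      have "rep c2 x (Suc d) \<in> A"
        unfolding rc2 using c(2) sideal_neg[OF sE A qA] sidealD(3)[OF A] by blast
      moreover have "c2 d = \<zero>" unfolding c2_def cqd using cc[of d] by (simp add: l_minus r_neg)
      ultimately have "rep c2 x d \<in> A"
        using rep_Suc[OF xc c2c, where n=d] rep_closed[where c=c2 and n=d, OF xc c2c] xc by simp
      then have IH: "rep c2 x d \<in> ?S" using Suc c2B by blast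
      have "rep c2 x (Suc d) = rep c2 x d"
        using rep_Suc[OF xc c2c, where n=d] rep_closed[where c=c2 and n=d, OF xc c2c] xc \<open>c2 d = \<zero>\<close> by simp
      then have "rep c2 x d \<oplus> q = (rep c x (Suc d) \<oplus> \<ominus> q) \<oplus> q" using rc2 by simp
      also have "\<dots> = rep c x (Suc d)" using rcA qc by (simp add: a_assoc l_neg)
      finally have "rep c x (Suc d) = rep c2 x d \<oplus> q" by simp
      then show "rep c x (Suc d) \<in> ?S" using IH qS sidealD(3)[OF sS] by simp
    qed
  qed
  have "A \<subseteq> ?S"
  proof
    fix y assume y: "y \<in> A"
    then have "y \<in> ext B x" using AE by blast
    then obtain c n where "\<forall>i. c i \<in> B" "y = rep c x n" by (rule extE)
    then show "y \<in> ?S" using claim y by blast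
  qed
  show "\<exists>F. finite F \<and> F \<subseteq> A \<and> A \<subseteq> ispan (ext B x) F"
    using finG GA \<open>A \<subseteq> ?S\<close> by blast
qed

end

context cring
begin

definition vec :: "'a set \<Rightarrow> nat \<Rightarrow> (nat \<Rightarrow> 'a) set" where
  "vec B s = {v. (\<forall>i<s. v i \<in> B) \<and> (\<forall>i\<ge>s. v i = \<zero>)}"

definition smod :: "'a set \<Rightarrow> nat \<Rightarrow> (nat \<Rightarrow> 'a) set \<Rightarrow> bool" where
  "smod B s M \<longleftrightarrow> M \<subseteq> vec B s \<and> (\<lambda>i. \<zero>) \<in> M \<and> (\<forall>v\<in>M. \<forall>w\<in>M. (\<lambda>i. v i \<oplus> w i) \<in> M) \<and>
     (\<forall>r\<in>B. \<forall>v\<in>M. (\<lambda>i. r \<otimes> v i) \<in> M)"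

definition vspan :: "'a set \<Rightarrow> (nat \<Rightarrow> 'a) set \<Rightarrow> (nat \<Rightarrow> 'a) set" where
  "vspan B F = {(\<lambda>i. \<Oplus>f\<in>F. c f \<otimes> f i) | c. c \<in> F \<rightarrow> B}"

lemma smodD:
  assumes "smod B s M"
  shows "M \<subseteq> vec B s" "(\<lambda>i. \<zero>) \<in> M" "v \<in> M \<Longrightarrow> w \<in> M \<Longrightarrow> (\<lambda>i. v i \<oplus> w i) \<in> M"
    "r \<in> B \<Longrightarrow> v \<in> M \<Longrightarrow> (\<lambda>i. r \<otimes> v i) \<in> M"
  using assms unfolding smod_def by auto

lemma vspanI:
  assumes "c \<in> F \<rightarrow> B" "v = (\<lambda>i. \<Oplus>f\<in>F. c f \<otimes> f i)"
  shows "v \<in> vspan B F"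
  using assms unfolding vspan_def by blast

context
  fixes B
  assumes sB: "subr B"
begin

lemma vec_carrier: "v \<in> vec B s \<Longrightarrow> v i \<in> carrier R"
  unfolding vec_def using subrD(1)[OF sB] by (cases "i < s") auto

lemma vcomb_in:
  assumes M: "smod B s M" and A: "finite A" and g: "\<And>a. a \<in> A \<Longrightarrow> g a \<in> M"
    and r: "\<And>a. a \<in> A \<Longrightarrow> r a \<in> B"
  shows "(\<lambda>i. \<Oplus>a\<in>A. r a \<otimes> g a i) \<in> M"
  using A g r
proof (induction A rule: finite_induct)
  case empty then show ?case using smodD(2)[OF M] by simp
next
  case (insert a F)
  have gc: "\<And>b i. b \<in> insert a F \<Longrightarrow> g b i \<in> carrier R"
    using insert.prems(1) smodD(1)[OF M] vec_carrier by blast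
  have rc: "\<And>b. b \<in> insert a F \<Longrightarrow> r b \<in> carrier R"
    using insert.prems(2) subrD(1)[OF sB] by blast
  have eq: "(\<lambda>i. \<Oplus>b\<in>insert a F. r b \<otimes> g b i) = (\<lambda>i. (\<lambda>i. r a \<otimes> g a i) i \<oplus> (\<lambda>i. \<Oplus>b\<in>F. r b \<otimes> g b i) i)"
  proof
    fix i show "(\<Oplus>b\<in>insert a F. r b \<otimes> g b i) = (\<lambda>i. r a \<otimes> g a i) i \<oplus> (\<lambda>i. \<Oplus>b\<in>F. r b \<otimes> g b i) i"
      using insert gc rc by (subst finsum_insert) auto
  qed
  have "(\<lambda>i. r a \<otimes> g a i) \<in> M" using smodD(4)[OF M] insert.prems by simp
  moreover have "(\<lambda>i. \<Oplus>b\<in>F. r b \<otimes> g b i) \<in> M" using insert by simp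
  ultimately show ?case unfolding eq by (rule smodD(3)[OF M])
qed

lemma vspan_sub:
  assumes "smod B s M" "finite F" "F \<subseteq> M"
  shows "vspan B F \<subseteq> M"
proof
  fix v assume "v \<in> vspan B F"
  then obtain c where c: "c \<in> F \<rightarrow> B" "v = (\<lambda>i. \<Oplus>f\<in>F. c f \<otimes> f i)" unfolding vspan_def by blast
  show "v \<in> M" unfolding c(2)
    by (rule vcomb_in[OF assms(1,2)]) (use c(1) assms(3) in auto)
qed

lemma vspan_smod:
  assumes "finite F" "F \<subseteq> vec B s"
  shows "smod B s (vspan B F)"
  unfolding smod_def
proof (intro conjI ballI)
  have Bc: "\<And>b. b \<in> B \<Longrightarrow> b \<in> carrier R" using subrD(1)[OF sB] by blast
  have Fc: "\<And>f i. f \<in> F \<Longrightarrow> f i \<in> carrier R" using assms(2) vec_carrier by blast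
  show "vspan B F \<subseteq> vec B s"
  proof
    fix v assume "v \<in> vspan B F"
    then obtain c where c: "c \<in> F \<rightarrow> B" "v = (\<lambda>i. \<Oplus>f\<in>F. c f \<otimes> f i)" unfolding vspan_def by blast
    have "v i \<in> B" if "i < s" for i
      unfolding c(2)
    proof (intro subr_finsum[OF sB assms(1)])
      fix f assume f: "f \<in> F"
      have "c f \<in> B" using c(1) f by blast
      moreover have "f i \<in> B" using assms(2) f that unfolding vec_def by blast
      ultimately show "c f \<otimes> f i \<in> B" by (rule subrD(5)[OF sB])
    qed
    moreover have "v i = \<zero>" if "i \<ge> s" for i
    proof -
      have "v i = (\<Oplus>f\<in>F. \<zero>)" unfolding c(2)
      proof (rule fcong)
        fix f assume f: "f \<in> F"
        have "c f \<in> carrier R" using c(1) f Bc by blast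
        moreover have "f i = \<zero>" using assms(2) f that unfolding vec_def by blast
        ultimately show "c f \<otimes> f i = \<zero>" by simp
      qed simp
      then show ?thesis by simp
    qed
    ultimately show "v \<in> vec B s" unfolding vec_def by blast
  qed
  show "(\<lambda>i. \<zero>) \<in> vspan B F"
  proof (rule vspanI[where c="\<lambda>_. \<zero>"])
    show "(\<lambda>_. \<zero>) \<in> F \<rightarrow> B" using subrD(3)[OF sB] by simp
    show "(\<lambda>i. \<zero>) = (\<lambda>i. \<Oplus>f\<in>F. (\<lambda>_. \<zero>) f \<otimes> f i)"
    proof
      fix i
      have "(\<Oplus>f\<in>F. (\<lambda>_. \<zero>) f \<otimes> f i) = (\<Oplus>f\<in>F. \<zero>)" using Fc by (intro fcong) auto
      then show "\<zero> = (\<Oplus>f\<in>F. (\<lambda>_. \<zero>) f \<otimes> f i)" by simp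
    qed
  qed
  show "(\<lambda>i. v i \<oplus> w i) \<in> vspan B F" if H: "v \<in> vspan B F" "w \<in> vspan B F" for v w
  proof -
    obtain c where c: "c \<in> F \<rightarrow> B" "v = (\<lambda>i. \<Oplus>f\<in>F. c f \<otimes> f i)" using H(1) unfolding vspan_def by blast
    obtain d where d: "d \<in> F \<rightarrow> B" "w = (\<lambda>i. \<Oplus>f\<in>F. d f \<otimes> f i)" using H(2) unfolding vspan_def by blast
    have cc: "\<And>f. f \<in> F \<Longrightarrow> c f \<in> carrier R" "\<And>f. f \<in> F \<Longrightarrow> d f \<in> carrier R" using c(1) d(1) Bc by auto
    show ?thesis
    proof (rule vspanI[where c="\<lambda>f. c f \<oplus> d f"])
      show "(\<lambda>f. c f \<oplus> d f) \<in> F \<rightarrow> B" using c(1) d(1) subrD(4)[OF sB] by auto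
      show "(\<lambda>i. v i \<oplus> w i) = (\<lambda>i. \<Oplus>f\<in>F. (c f \<oplus> d f) \<otimes> f i)"
      proof
        fix i
        have "v i \<oplus> w i = (\<Oplus>f\<in>F. c f \<otimes> f i \<oplus> d f \<otimes> f i)"
          unfolding c(2) d(2) by (rule finsum_addf[symmetric]) (auto simp: cc Fc)
        also have "\<dots> = (\<Oplus>f\<in>F. (c f \<oplus> d f) \<otimes> f i)"
          by (intro fcong) (auto simp: l_distr cc Fc)
        finally show "v i \<oplus> w i = (\<Oplus>f\<in>F. (c f \<oplus> d f) \<otimes> f i)" .
      qed
    qed
  qed
  show "(\<lambda>i. r \<otimes> v i) \<in> vspan B F" if H: "r \<in> B" "v \<in> vspan B F" for r v
  proof -
    obtain c where c: "c \<in> F \<rightarrow> B" "v = (\<lambda>i. \<Oplus>f\<in>F. c f \<otimes> f i)" using H(2) unfolding vspan_def by blast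
    have cc: "\<And>f. f \<in> F \<Longrightarrow> c f \<in> carrier R" using c(1) Bc by auto
    have rc: "r \<in> carrier R" using H(1) Bc by auto
    show ?thesis
    proof (rule vspanI[where c="\<lambda>f. r \<otimes> c f"])
      show "(\<lambda>f. r \<otimes> c f) \<in> F \<rightarrow> B" using c(1) H(1) subrD(5)[OF sB] by auto
      show "(\<lambda>i. r \<otimes> v i) = (\<lambda>i. \<Oplus>f\<in>F. (r \<otimes> c f) \<otimes> f i)"
      proof
        fix i
        have "r \<otimes> v i = (\<Oplus>f\<in>F. r \<otimes> (c f \<otimes> f i))"
          unfolding c(2) by (rule finsum_rdistr) (auto simp: cc Fc rc assms(1))
        also have "\<dots> = (\<Oplus>f\<in>F. (r \<otimes> c f) \<otimes> f i)"
          by (intro fcong) (auto simp: m_assoc cc Fc rc)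
        finally show "r \<otimes> v i = (\<Oplus>f\<in>F. (r \<otimes> c f) \<otimes> f i)" .
      qed
    qed
  qed
qed

lemma vspan_self:
  assumes "finite F" "F \<subseteq> vec B s" "f \<in> F"
  shows "f \<in> vspan B F"
proof (rule vspanI[where c="\<lambda>g. if g = f then \<one> else \<zero>"])
  have Fc: "\<And>g i. g \<in> F \<Longrightarrow> g i \<in> carrier R" using assms(2) vec_carrier by blast
  show "(\<lambda>g. if g = f then \<one> else \<zero>) \<in> F \<rightarrow> B" using subrD(2,3)[OF sB] by auto
  show "f = (\<lambda>i. \<Oplus>g\<in>F. (if g = f then \<one> else \<zero>) \<otimes> g i)"
  proof
    fix i
    have "(\<Oplus>g\<in>F. (if g = f then \<one> else \<zero>) \<otimes> g i) = (\<Oplus>g\<in>F. if f = g then (\<lambda>g. g i) g else \<zero>)"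
      using Fc by (intro fcong) auto
    also have "\<dots> = f i" using finsum_singleton[of f F "\<lambda>g. g i"] assms(1,3) Fc by auto
    finally show "f i = (\<Oplus>g\<in>F. (if g = f then \<one> else \<zero>) \<otimes> g i)" by simp
  qed
qed

lemma fg_mod:
  assumes nB: "noeth B"
  shows "smod B s M \<Longrightarrow> \<exists>F. finite F \<and> F \<subseteq> M \<and> M \<subseteq> vspan B F"
proof (induction s arbitrary: M)
  case 0
  have "M \<subseteq> {\<lambda>i. \<zero>}" using smodD(1)[OF 0] unfolding vec_def by auto
  moreover have "(\<lambda>i. \<zero>) \<in> vspan B {}" by (rule vspanI[where c="\<lambda>_. \<zero>"]) auto
  ultimately show ?case by (intro exI[of _ "{}"]) auto
next
  case (Suc s)
  note M = Suc.prems
  have Bc: "\<And>b. b \<in> B \<Longrightarrow> b \<in> carrier R" using subrD(1)[OF sB] by blast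
  have Mv: "\<And>v. v \<in> M \<Longrightarrow> v \<in> vec B (Suc s)" using smodD(1)[OF M] by blast
  have Mc: "\<And>v i. v \<in> M \<Longrightarrow> v i \<in> carrier R" using Mv vec_carrier by blast
  define P where "P = {v s | v. v \<in> M}"
  have sP: "sideal B P" unfolding sideal_def
  proof (intro conjI ballI)
    show "P \<subseteq> B" unfolding P_def using Mv unfolding vec_def by auto
    show "\<zero> \<in> P" unfolding P_def using smodD(2)[OF M] by force
    show "x \<oplus> y \<in> P" if H: "x \<in> P" "y \<in> P" for x y
    proof -
      obtain v w where "v \<in> M" "w \<in> M" "x = v s" "y = w s" using H unfolding P_def by blast
      then show ?thesis unfolding P_def using smodD(3)[OF M, of v w] by force
    qed
    show "r \<otimes> x \<in> P" if H: "r \<in> B" "x \<in> P" for r x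
    proof -
      obtain v where "v \<in> M" "x = v s" using H unfolding P_def by blast
      then show ?thesis unfolding P_def using smodD(4)[OF M H(1), of v] by force
    qed
  qed
  obtain F1 where F1: "finite F1" "F1 \<subseteq> P" "P \<subseteq> ispan B F1" using nB sP unfolding noeth_def by blast
  define pre where "pre p = (SOME v. v \<in> M \<and> v s = p)" for p
  have pre: "pre p \<in> M \<and> pre p s = p" if "p \<in> P" for p
  proof -
    have "\<exists>v. v \<in> M \<and> v s = p" using that unfolding P_def by blast
    then show ?thesis unfolding pre_def by (rule someI_ex)
  qed
  define M' where "M' = {v \<in> M. v s = \<zero>}"
  have sM': "smod B s M'" unfolding smod_def
  proof (intro conjI ballI)
    show "M' \<subseteq> vec B s"
    proof
      fix v assume v: "v \<in> M'"
      then have "v \<in> vec B (Suc s)" "v s = \<zero>" unfolding M'_def using Mv by auto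
      moreover have "v i = \<zero>" if "i \<ge> s" "v \<in> vec B (Suc s)" "v s = \<zero>" for i
      proof (cases "i = s")
        case False then have "i \<ge> Suc s" using that(1) by simp
        then show ?thesis using that(2) unfolding vec_def by blast
      qed (use that in simp)
      ultimately show "v \<in> vec B s" unfolding vec_def by auto
    qed
    show "(\<lambda>i. \<zero>) \<in> M'" unfolding M'_def using smodD(2)[OF M] by simp
    show "(\<lambda>i. v i \<oplus> w i) \<in> M'" if "v \<in> M'" "w \<in> M'" for v w
      using that smodD(3)[OF M, of v w] unfolding M'_def by simp
    show "(\<lambda>i. r \<otimes> v i) \<in> M'" if "r \<in> B" "v \<in> M'" for r v
      using that smodD(4)[OF M, of r v] Bc unfolding M'_def by simp
  qed
  obtain F2 where F2: "finite F2" "F2 \<subseteq> M'" "M' \<subseteq> vspan B F2" using Suc.IH[OF sM'] by blast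
  define G where "G = pre ` F1 \<union> F2"
  have finG: "finite G" unfolding G_def using F1(1) F2(1) by simp
  have GM: "G \<subseteq> M" unfolding G_def using pre F1(2) F2(2) unfolding M'_def by blast
  have Gv: "G \<subseteq> vec B (Suc s)" using GM Mv by blast
  let ?V = "vspan B G"
  have sV: "smod B (Suc s) ?V" by (rule vspan_smod[OF finG Gv])
  have GV: "G \<subseteq> ?V" using vspan_self[OF finG Gv] by blast
  have "M \<subseteq> ?V"
  proof
    fix v assume v: "v \<in> M"
    have "v s \<in> P" unfolding P_def using v by blast
    then obtain c where c: "c \<in> F1 \<rightarrow> B" "v s = (\<Oplus>p\<in>F1. c p \<otimes> p)"
      using F1(3) unfolding ispan_def by blast
    have cc: "\<And>p. p \<in> F1 \<Longrightarrow> c p \<in> carrier R" using c(1) Bc by blast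
    have preF: "\<And>p. p \<in> F1 \<Longrightarrow> pre p \<in> M \<and> pre p s = p" using pre F1(2) by blast
    define w where "w = (\<lambda>i. \<Oplus>p\<in>F1. c p \<otimes> pre p i)"
    have wM: "w \<in> M" unfolding w_def by (rule vcomb_in[OF M F1(1)]) (use preF c(1) in auto)
    have wV: "w \<in> ?V" unfolding w_def
      by (rule vcomb_in[OF sV F1(1)]) (use preF c(1) GV in \<open>auto simp: G_def\<close>)
    have Pc: "\<And>p. p \<in> F1 \<Longrightarrow> p \<in> carrier R" using F1(2) sidealD(1)[OF sP] Bc by blast
    have ws: "w s = v s" unfolding w_def c(2)
      by (intro fcong) (use preF cc Pc in auto)
    have wc: "\<And>i. w i \<in> carrier R" using Mc[OF wM] .
    have m1: "\<ominus> \<one> \<in> B" using subrD(2,6)[OF sB] by blast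
    define u where "u = (\<lambda>i. v i \<oplus> \<ominus> \<one> \<otimes> w i)"
    have uM: "u \<in> M" unfolding u_def
      using smodD(3)[OF M v smodD(4)[OF M m1 wM]] by simp
    have neg: "\<And>i. \<ominus> \<one> \<otimes> w i = \<ominus> w i" using wc by (simp add: l_minus)
    have "u s = \<zero>" unfolding u_def neg ws using Mc[OF v] r_neg by simp
    then have "u \<in> M'" unfolding M'_def using uM by simp
    then have "u \<in> vspan B F2" using F2(3) by blast
    moreover have "vspan B F2 \<subseteq> ?V"
      by (rule vspan_sub[OF sV F2(1)]) (use GV G_def in auto)
    ultimately have uV: "u \<in> ?V" by blast
    have "v = (\<lambda>i. w i \<oplus> u i)"
    proof
      fix i
      have "w i \<oplus> (v i \<oplus> \<ominus> w i) = v i \<oplus> (w i \<oplus> \<ominus> w i)"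
        using a_lcomm[of "w i" "v i" "\<ominus> w i"] Mc[OF v] wc[of i] by simp
      also have "\<dots> = v i" using Mc[OF v] wc[of i] r_neg by simp
      finally show "v i = w i \<oplus> u i" unfolding u_def neg by simp
    qed
    then show "v \<in> ?V" using smodD(3)[OF sV wV uV] by simp
  qed
  then show ?case using finG GM by blast
qed

end

end

context cring
begin

lemma sideal_ideal:
  assumes "sideal (carrier R) A"
  shows "ideal A R"
proof (rule idealI)
  show "ring R" by (rule ring_axioms)
  have sub: "A \<subseteq> carrier R" using sidealD(1)[OF assms] .
  have neg: "\<ominus> a \<in> A" if "a \<in> A" for a
  proof -
    have "\<ominus> \<one> \<otimes> a \<in> A" using sidealD(4)[OF assms _ that] by simp
    moreover have "a \<in> carrier R" using sub that by blast
    ultimately show ?thesis by (simp add: l_minus)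
  qed
  have ne: "A \<noteq> {}" using sidealD(2)[OF assms] by blast
  show "subgroup A (add_monoid R)"
    by (rule add.subgroupI) (use sub ne neg sidealD(3)[OF assms] in \<open>auto simp: a_inv_def[symmetric]\<close>)
  show "x \<otimes> a \<in> A" if "a \<in> A" "x \<in> carrier R" for a x
    using sidealD(4)[OF assms that(2,1)] .
  show "a \<otimes> x \<in> A" if "a \<in> A" "x \<in> carrier R" for a x
  proof -
    have "a \<in> carrier R" using sub that(1) by blast
    then show ?thesis using sidealD(4)[OF assms that(2,1)] that(2) by (simp add: m_comm)
  qed
qed

lemma subr_carrier: "subr (carrier R)"
  unfolding subr_def by auto

lemma ideal_sideal:
  assumes "ideal A R"
  shows "sideal (carrier R) A"
  unfolding sideal_def using assms
  by (auto simp: ideal.Icarr additive_subgroup.zero_closed ideal.axioms(1)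
      additive_subgroup.a_closed ideal.I_l_closed)

lemma genideal_ispan:
  assumes "finite F" "F \<subseteq> carrier R"
  shows "Idl F \<subseteq> ispan (carrier R) F"
  by (rule genideal_minimal[OF sideal_ideal[OF ispan_sideal[OF subr_carrier assms]]])
     (use ispan_self[OF subr_carrier assms] in blast)

lemma noeth_carrier:
  assumes "noetherian_ring R"
  shows "noeth (carrier R)"
  unfolding noeth_def
proof (intro allI impI)
  fix A assume A: "sideal (carrier R) A"
  obtain F where F: "F \<subseteq> carrier R" "finite F" "A = Idl F"
    using noetherian_ring.finetely_gen[OF assms sideal_ideal[OF A]] by blast
  show "\<exists>F. finite F \<and> F \<subseteq> A \<and> A \<subseteq> ispan (carrier R) F"
    using F genideal_self[OF F(1)] genideal_ispan[OF F(2,1)] by blast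
qed

lemma ideal_finsum:
  assumes "ideal A R" "finite S" "\<And>i. i \<in> S \<Longrightarrow> f i \<in> A"
  shows "(\<Oplus>i\<in>S. f i) \<in> A"
  using addclosed_finsum[of A S f] ideal_sideal[OF assms(1)] assms(2,3) sidealD subrD(1)[OF subr_carrier]
  unfolding sideal_def by blast

lemma ipow_ideal:
  assumes "ideal I R"
  shows "ideal (ideal_pow R I n) R"
  by (induction n) (simp_all add: oneideal ideal_prod_is_ideal assms)

lemma ipow_one:
  assumes "ideal I R"
  shows "ideal_pow R I 1 = I"
  using ideal_prod_one[OF assms] by simp

lemma ipow_mult:
  assumes "ideal I R" "x \<in> ideal_pow R I a" "y \<in> ideal_pow R I b"
  shows "x \<otimes> y \<in> ideal_pow R I (a + b)"
  using assms(2)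
proof (induction a arbitrary: x)
  case 0
  then show ?case using ideal.I_r_closed[OF ipow_ideal[OF assms(1)] assms(3)]
    ideal.I_l_closed[OF ipow_ideal[OF assms(1)] assms(3)] by simp
next
  case (Suc a)
  have "x \<in> ideal_prod R I (ideal_pow R I a)" using Suc.prems by simp
  then show ?case
  proof (induction x rule: ideal_prod.induct)
    case (prod i p)
    have ic: "i \<in> carrier R" using prod(1) ideal.Icarr[OF assms(1)] by blast
    have pc: "p \<in> carrier R" using prod(2) ideal.Icarr[OF ipow_ideal[OF assms(1)]] by blast
    have yc: "y \<in> carrier R" using assms(3) ideal.Icarr[OF ipow_ideal[OF assms(1)]] by blast
    have "p \<otimes> y \<in> ideal_pow R I (a + b)" using Suc.IH prod(2) by simp
    then have "i \<otimes> (p \<otimes> y) \<in> ideal_prod R I (ideal_pow R I (a + b))"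
      using prod(1) by (rule ideal_prod.prod[rotated])
    then show ?case using ic pc yc by (simp add: m_assoc)
  next
    case (sum s1 s2)
    have s: "s1 \<in> carrier R" "s2 \<in> carrier R"
      using sum(1,2) ideal_prod_in_carrier[OF assms(1) ipow_ideal[OF assms(1)]] by auto
    have yc: "y \<in> carrier R" using assms(3) ideal.Icarr[OF ipow_ideal[OF assms(1)]] by blast
    have "(s1 \<oplus> s2) \<otimes> y = s1 \<otimes> y \<oplus> s2 \<otimes> y" using s yc by (simp add: l_distr)
    then show ?case using sum(3,4) by (simp add: ideal_prod.sum)
  qed
qed

lemma ipowK_mult:
  assumes "ideal I R" "ideal K R" "x \<in> ideal_pow R I a" "y \<in> ideal_prod R (ideal_pow R I b) K"
  shows "x \<otimes> y \<in> ideal_prod R (ideal_pow R I (a + b)) K"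
  using assms(4)
proof (induction y rule: ideal_prod.induct)
  case (prod p k)
  have xc: "x \<in> carrier R" using assms(3) ideal.Icarr[OF ipow_ideal[OF assms(1)]] by blast
  have pc: "p \<in> carrier R" using prod(1) ideal.Icarr[OF ipow_ideal[OF assms(1)]] by blast
  have kc: "k \<in> carrier R" using prod(2) ideal.Icarr[OF assms(2)] by blast
  have "x \<otimes> p \<in> ideal_pow R I (a + b)" using ipow_mult[OF assms(1,3) prod(1)] .
  then have "(x \<otimes> p) \<otimes> k \<in> ideal_prod R (ideal_pow R I (a + b)) K"
    using prod(2) by (rule ideal_prod.prod)
  then show ?case using xc pc kc by (simp add: m_assoc)
next
  case (sum s1 s2)
  have s: "s1 \<in> carrier R" "s2 \<in> carrier R"
    using sum(1,2) ideal_prod_in_carrier[OF ipow_ideal[OF assms(1)] assms(2)] by auto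
  have xc: "x \<in> carrier R" using assms(3) ideal.Icarr[OF ipow_ideal[OF assms(1)]] by blast
  have "x \<otimes> (s1 \<oplus> s2) = x \<otimes> s1 \<oplus> x \<otimes> s2" using s xc by (simp add: r_distr)
  then show ?case using sum(3,4) by (simp add: ideal_prod.sum)
qed

end

primrec TT :: "('a, 'b) ring_scheme \<Rightarrow> 'a list \<Rightarrow> nat \<Rightarrow> (nat \<Rightarrow> 'a) set" where
  "TT R as 0 = {monom (UP R) c 0 | c. c \<in> carrier R}"
| "TT R as (Suc k) = cring.ext (UP R) (TT R as k) (monom (UP R) (as ! k) 1)"

context UP_cring
begin

lemma TT0: "TT R as 0 = {monom P c 0 | c. c \<in> carrier R}"
  by (simp add: P_def)

lemma TTSuc: "TT R as (Suc k) = P.ext (TT R as k) (monom P (as ! k) 1)"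
  by (simp add: P_def)

lemma monom_finsum:
  assumes "finite A" "\<And>a. a \<in> A \<Longrightarrow> f a \<in> carrier R"
  shows "monom P (\<Oplus>a\<in>A. f a) n = (\<Oplus>\<^bsub>P\<^esub>a\<in>A. monom P (f a) n)"
  using assms
proof (induction A rule: finite_induct)
  case empty then show ?case by simp
next
  case (insert a F)
  have c: "(\<Oplus>a\<in>F. f a) \<in> carrier R" using insert by (intro R.finsum_closed) auto
  have "monom P (\<Oplus>a\<in>insert a F. f a) n = monom P (f a \<oplus> (\<Oplus>a\<in>F. f a)) n"
    using insert by (subst R.finsum_insert) auto
  also have "\<dots> = monom P (f a) n \<oplus>\<^bsub>P\<^esub> monom P (\<Oplus>a\<in>F. f a) n"
    using insert c by simp
  also have "\<dots> = (\<Oplus>\<^bsub>P\<^esub>a\<in>insert a F. monom P (f a) n)"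
    using insert by (subst P.finsum_insert) auto
  finally show ?case .
qed

lemma B0I: "c \<in> carrier R \<Longrightarrow> u = monom P c 0 \<Longrightarrow> u \<in> {monom P c 0 | c. c \<in> carrier R}"
  by blast

lemma B0E: "u \<in> {monom P c 0 | c. c \<in> carrier R} \<Longrightarrow> (\<And>c. c \<in> carrier R \<Longrightarrow> u = monom P c 0 \<Longrightarrow> thesis) \<Longrightarrow> thesis"
  by blast

lemma subr_B0: "P.subr {monom P c 0 | c. c \<in> carrier R}"
  unfolding P.subr_def
proof (intro conjI ballI)
  let ?B = "{monom P c 0 | c. c \<in> carrier R}"
  show "?B \<subseteq> carrier P" by (auto elim: B0E)
  show "\<one>\<^bsub>P\<^esub> \<in> ?B" by (rule B0I[OF R.one_closed]) simp
  show "\<zero>\<^bsub>P\<^esub> \<in> ?B" by (rule B0I[OF R.zero_closed]) simp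
  show "x \<oplus>\<^bsub>P\<^esub> y \<in> ?B" if H: "x \<in> ?B" "y \<in> ?B" for x y
  proof -
    obtain a where a: "a \<in> carrier R" "x = monom P a 0" using H(1) by (rule B0E)
    obtain b where b: "b \<in> carrier R" "y = monom P b 0" using H(2) by (rule B0E)
    have "a \<oplus> b \<in> carrier R" using a b by simp
    then show ?thesis by (rule B0I) (simp add: a b)
  qed
  show "x \<otimes>\<^bsub>P\<^esub> y \<in> ?B" if H: "x \<in> ?B" "y \<in> ?B" for x y
  proof -
    obtain a where a: "a \<in> carrier R" "x = monom P a 0" using H(1) by (rule B0E)
    obtain b where b: "b \<in> carrier R" "y = monom P b 0" using H(2) by (rule B0E)
    have "a \<otimes> b \<in> carrier R" using a b by simp
    then show ?thesis by (rule B0I) (simp add: a b monom_mult[of a b 0 0, simplified])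
  qed
  show "\<ominus>\<^bsub>P\<^esub> x \<in> ?B" if H: "x \<in> ?B" for x
  proof -
    obtain a where a: "a \<in> carrier R" "x = monom P a 0" using H by (rule B0E)
    have "\<ominus> a \<in> carrier R" using a by simp
    then show ?thesis by (rule B0I) (simp add: a)
  qed
qed

lemma noeth_B0:
  assumes "noetherian_ring R"
  shows "P.noeth {monom P c 0 | c. c \<in> carrier R}"
  unfolding P.noeth_def
proof (intro allI impI)
  let ?B = "{monom P c 0 | c. c \<in> carrier R}"
  fix A assume A: "P.sideal ?B A"
  define A' where "A' = {c \<in> carrier R. monom P c 0 \<in> A}"
  have sA': "R.sideal (carrier R) A'" unfolding R.sideal_def
  proof (intro conjI ballI)
    show "A' \<subseteq> carrier R" unfolding A'_def by blast
    show "\<zero> \<in> A'" unfolding A'_def using P.sidealD(2)[OF A] by simp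
    show "x \<oplus> y \<in> A'" if "x \<in> A'" "y \<in> A'" for x y
      using that P.sidealD(3)[OF A] unfolding A'_def by auto
    show "r \<otimes> x \<in> A'" if "r \<in> carrier R" "x \<in> A'" for r x
    proof -
      have "monom P r 0 \<in> ?B" using that(1) by blast
      then have "monom P r 0 \<otimes>\<^bsub>P\<^esub> monom P x 0 \<in> A" using that(2) P.sidealD(4)[OF A] unfolding A'_def by blast
      then show ?thesis using that monom_mult[of r x 0 0] unfolding A'_def by simp
    qed
  qed
  obtain F' where F': "finite F'" "F' \<subseteq> A'" "A' \<subseteq> R.ispan (carrier R) F'"
    using R.noeth_carrier[OF assms] sA' unfolding R.noeth_def by blast
  define F where "F = (\<lambda>c. monom P c 0) ` F'"
  have finF: "finite F" unfolding F_def using F'(1) by simp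
  have FA: "F \<subseteq> A" unfolding F_def using F'(2) unfolding A'_def by blast
  have sB: "P.subr ?B" by (rule subr_B0)
  have AB: "A \<subseteq> ?B" using P.sidealD(1)[OF A] .
  have FB: "F \<subseteq> ?B" using FA AB by blast
  have sS: "P.sideal ?B (P.ispan ?B F)" by (rule P.ispan_sideal[OF sB finF FB])
  have "A \<subseteq> P.ispan ?B F"
  proof
    fix y assume y: "y \<in> A"
    then obtain c where c: "c \<in> carrier R" "y = monom P c 0" using AB by blast
    then have "c \<in> A'" unfolding A'_def using y by simp
    then obtain e where e: "e \<in> F' \<rightarrow> carrier R" "c = (\<Oplus>f\<in>F'. e f \<otimes> f)"
      using F'(3) unfolding R.ispan_def by blast
    have F'c: "\<And>f. f \<in> F' \<Longrightarrow> f \<in> carrier R" using F'(2) unfolding A'_def by blast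
    have "y = (\<Oplus>\<^bsub>P\<^esub>f\<in>F'. monom P (e f \<otimes> f) 0)"
      unfolding c(2) e(2) using e(1) F'c F'(1) by (intro monom_finsum) auto
    also have "\<dots> = (\<Oplus>\<^bsub>P\<^esub>f\<in>F'. monom P (e f) 0 \<otimes>\<^bsub>P\<^esub> monom P f 0)"
    proof (rule P.fcong)
      fix f assume f: "f \<in> F'"
      have c1: "e f \<in> carrier R" "f \<in> carrier R" using e(1) F'c f by auto
      then show "monom P (e f \<otimes> f) 0 = monom P (e f) 0 \<otimes>\<^bsub>P\<^esub> monom P f 0"
        using monom_mult[of "e f" f 0 0] by simp
      show "monom P (e f) 0 \<otimes>\<^bsub>P\<^esub> monom P f 0 \<in> carrier P" using c1 by simp
    qed
    also have "\<dots> \<in> P.ispan ?B F"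
    proof (rule P.sideal_finsum[OF sB sS F'(1)])
      show "monom P (e f) 0 \<in> ?B" if "f \<in> F'" for f using e(1) that by blast
      show "monom P f 0 \<in> P.ispan ?B F" if "f \<in> F'" for f
        using P.ispan_self[OF sB finF FB] that unfolding F_def by blast
    qed
    finally show "y \<in> P.ispan ?B F" .
  qed
  then show "\<exists>F. finite F \<and> F \<subseteq> A \<and> A \<subseteq> P.ispan ?B F" using finF FA by blast
qed

lemma TT_props:
  assumes "noetherian_ring R" "set as \<subseteq> carrier R" "k \<le> length as"
  shows "P.subr (TT R as k) \<and> P.noeth (TT R as k)"
  using assms(3)
proof (induction k)
  case 0 then show ?case using subr_B0 noeth_B0[OF assms(1)] unfolding TT0 by simp
next
  case (Suc k)
  have "as ! k \<in> carrier R" using assms(2) nth_mem[of k as] Suc.prems by auto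
  then have xc: "monom P (as ! k) 1 \<in> carrier P" by simp
  show ?case unfolding TTSuc using Suc P.subr_ext[OF _ xc] P.noeth_ext[OF _ _ xc] by simp
qed

lemma TT_mono:
  assumes "noetherian_ring R" "set as \<subseteq> carrier R" "k \<le> k'" "k' \<le> length as"
  shows "TT R as k \<subseteq> TT R as k'"
  using assms(3,4)
proof (induction k' rule: dec_induct)
  case base then show ?case by simp
next
  case (step m)
  have "as ! m \<in> carrier R" using assms(2) nth_mem[of m as] step by auto
  then have xc: "monom P (as ! m) 1 \<in> carrier P" by simp
  have "TT R as m \<subseteq> TT R as (Suc m)" unfolding TTSuc
    using P.B_ext[OF _ xc] TT_props[OF assms(1,2), of m] step by auto
  then show ?case using step by auto
qed

lemma xj_TT:
  assumes "noetherian_ring R" "set as \<subseteq> carrier R" "j < length as"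
  shows "monom P (as ! j) 1 \<in> TT R as (length as)"
proof -
  have "as ! j \<in> carrier R" using assms(2) nth_mem[of j as] assms(3) by auto
  then have xc: "monom P (as ! j) 1 \<in> carrier P" by simp
  have "monom P (as ! j) 1 \<in> TT R as (Suc j)" unfolding TTSuc
    using P.x_ext[OF _ xc] TT_props[OF assms(1,2), of j] assms(3) by auto
  then show ?thesis using TT_mono[OF assms(1,2), of "Suc j" "length as"] assms(3) by auto
qed

end

context UP_cring
begin

definition RS :: "'a set \<Rightarrow> (nat \<Rightarrow> 'a) set" where
  "RS I = {p \<in> carrier P. \<forall>n. coeff P p n \<in> ideal_pow R I n}"

lemma subr_RS:
  assumes I: "ideal I R"
  shows "P.subr (RS I)"
  unfolding P.subr_def
proof (intro conjI ballI)
  have sI: "\<And>n. R.sideal (carrier R) (ideal_pow R I n)" using R.ideal_sideal[OF R.ipow_ideal[OF I]] .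
  have Ic: "\<And>n x. x \<in> ideal_pow R I n \<Longrightarrow> x \<in> carrier R" using sI R.sidealD(1) by blast
  show "RS I \<subseteq> carrier P" unfolding RS_def by blast
  show "\<one>\<^bsub>P\<^esub> \<in> RS I" unfolding RS_def using R.sidealD(2)[OF sI] by auto
  show "\<zero>\<^bsub>P\<^esub> \<in> RS I" unfolding RS_def using R.sidealD(2)[OF sI] by auto
  show "x \<oplus>\<^bsub>P\<^esub> y \<in> RS I" if H: "x \<in> RS I" "y \<in> RS I" for x y
    using H R.sidealD(3)[OF sI] unfolding RS_def by auto
  show "\<ominus>\<^bsub>P\<^esub> x \<in> RS I" if H: "x \<in> RS I" for x
    using H R.sideal_neg[OF R.subr_carrier sI] unfolding RS_def by auto
  show "x \<otimes>\<^bsub>P\<^esub> y \<in> RS I" if H: "x \<in> RS I" "y \<in> RS I" for x y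
  proof -
    have xy: "x \<in> carrier P" "y \<in> carrier P" using H unfolding RS_def by auto
    have "coeff P (x \<otimes>\<^bsub>P\<^esub> y) n \<in> ideal_pow R I n" for n
    proof -
      have "coeff P (x \<otimes>\<^bsub>P\<^esub> y) n = (\<Oplus>i \<in> {..n}. coeff P x i \<otimes> coeff P y (n - i))"
        using xy by simp
      also have "\<dots> \<in> ideal_pow R I n"
      proof (rule R.ideal_finsum[OF R.ipow_ideal[OF I]])
        fix i assume i: "i \<in> {..n}"
        have "coeff P x i \<otimes> coeff P y (n - i) \<in> ideal_pow R I (i + (n - i))"
          using H unfolding RS_def by (intro R.ipow_mult[OF I]) auto
        then show "coeff P x i \<otimes> coeff P y (n - i) \<in> ideal_pow R I n" using i by simp
      qed simp
      finally show ?thesis .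
    qed
    then show ?thesis unfolding RS_def using xy by simp
  qed
qed

lemma TT_RS:
  assumes N: "noetherian_ring R" and asc: "set as \<subseteq> carrier R" and I: "ideal I R"
    and asI: "set as \<subseteq> I" and k: "k \<le> length as"
  shows "TT R as k \<subseteq> RS I"
  using k
proof (induction k)
  case 0
  have sI: "\<And>n. R.sideal (carrier R) (ideal_pow R I n)" using R.ideal_sideal[OF R.ipow_ideal[OF I]] .
  show ?case unfolding TT0 RS_def using R.sidealD(2)[OF sI] by auto
next
  case (Suc k)
  have ak: "as ! k \<in> I" using asI nth_mem[of k as] Suc.prems by auto
  have akc: "as ! k \<in> carrier R" using asc nth_mem[of k as] Suc.prems by auto
  have xc: "monom P (as ! k) 1 \<in> carrier P" using akc by simp
  have sI: "\<And>n. R.sideal (carrier R) (ideal_pow R I n)" using R.ideal_sideal[OF R.ipow_ideal[OF I]] .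
  have "monom P (as ! k) 1 \<in> RS I"
    unfolding RS_def using xc ak R.sidealD(2)[OF sI] R.ipow_one[OF I] akc by auto
  then show ?case unfolding TTSuc
    using P.ext_min[OF _ xc subr_RS[OF I]] TT_props[OF N asc, of k] Suc by auto
qed

lemma monom_TT:
  assumes N: "noetherian_ring R" and asc: "set as \<subseteq> carrier R" and I: "I = Idl (set as)"
    and c: "c \<in> ideal_pow R I n"
  shows "monom P c n \<in> TT R as (length as)"
  using c
proof (induction n arbitrary: c)
  let ?T = "TT R as (length as)"
  have sT: "P.subr ?T" using TT_props[OF N asc, of "length as"] by simp
  have T0: "TT R as 0 \<subseteq> ?T" using TT_mono[OF N asc, of 0 "length as"] by simp
  have Iid: "ideal I R" unfolding I by (rule R.genideal_ideal[OF asc])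
  {
    case 0
    then have "c \<in> carrier R" by simp
    then have "monom P c 0 \<in> TT R as 0" unfolding TT0 by blast
    then show ?case using T0 by blast
  next
    case (Suc n)
    have mI: "monom P i 1 \<in> ?T" if i: "i \<in> I" for i
    proof -
      have "i \<in> R.ispan (carrier R) (set as)" using R.genideal_ispan[OF _ asc] i unfolding I by blast
      then obtain e where e: "e \<in> set as \<rightarrow> carrier R" "i = (\<Oplus>f\<in>set as. e f \<otimes> f)"
        unfolding R.ispan_def by blast
      have fc: "\<And>f. f \<in> set as \<Longrightarrow> f \<in> carrier R" using asc by blast
      have "monom P i 1 = (\<Oplus>\<^bsub>P\<^esub>f\<in>set as. monom P (e f \<otimes> f) 1)"
        unfolding e(2) using e(1) fc by (intro monom_finsum) auto
      also have "\<dots> = (\<Oplus>\<^bsub>P\<^esub>f\<in>set as. monom P (e f) 0 \<otimes>\<^bsub>P\<^esub> monom P f 1)"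
      proof (rule P.fcong)
        fix f assume f: "f \<in> set as"
        have c1: "e f \<in> carrier R" "f \<in> carrier R" using e(1) fc f by auto
        then show "monom P (e f \<otimes> f) 1 = monom P (e f) 0 \<otimes>\<^bsub>P\<^esub> monom P f 1"
          using monom_mult[of "e f" f 0 1] by simp
        show "monom P (e f) 0 \<otimes>\<^bsub>P\<^esub> monom P f 1 \<in> carrier P" using c1 by simp
      qed
      also have "\<dots> \<in> ?T"
      proof (rule P.subr_finsum[OF sT], simp)
        fix f assume f: "f \<in> set as"
        have "monom P (e f) 0 \<in> TT R as 0" unfolding TT0 using e(1) f by blast
        then have m1: "monom P (e f) 0 \<in> ?T" using T0 by blast
        obtain j where j: "j < length as" "f = as ! j" using f by (auto simp: in_set_conv_nth)
        have m2: "monom P f 1 \<in> ?T" using xj_TT[OF N asc j(1)] j(2) by simp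
        show "monom P (e f) 0 \<otimes>\<^bsub>P\<^esub> monom P f 1 \<in> ?T" by (rule P.subrD(5)[OF sT m1 m2])
      qed
      finally show ?thesis .
    qed
    have "c \<in> ideal_prod R I (ideal_pow R I n)" using Suc.prems by simp
    then show ?case
    proof (induction c rule: ideal_prod.induct)
      case (prod i p)
      have ic: "i \<in> carrier R" using prod(1) ideal.Icarr[OF Iid] by blast
      have pc: "p \<in> carrier R" using prod(2) ideal.Icarr[OF R.ipow_ideal[OF Iid]] by blast
      have "monom P (i \<otimes> p) (Suc n) = monom P i 1 \<otimes>\<^bsub>P\<^esub> monom P p n"
        using monom_mult[of i p 1 n] ic pc by simp
      moreover have "monom P p n \<in> ?T" using Suc.IH prod(2) by blast
      ultimately show ?case using mI[OF prod(1)] P.subrD(5)[OF sT] by simp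
    next
      case (sum s1 s2)
      have s: "s1 \<in> carrier R" "s2 \<in> carrier R"
        using sum(1,2) R.ideal_prod_in_carrier[OF Iid R.ipow_ideal[OF Iid]] by auto
      then show ?case using sum(3,4) P.subrD(4)[OF sT] by simp
    qed
  }
qed

end

context cring
begin

lemma h_addsub:
  assumes "a \<in> carrier R" "r1 \<in> carrier R" "r2 \<in> carrier R" "c1 \<in> carrier R" "c2 \<in> carrier R"
  shows "a \<otimes> (r1 \<oplus> r2) \<ominus> (c1 \<oplus> c2) = (a \<otimes> r1 \<ominus> c1) \<oplus> (a \<otimes> r2 \<ominus> c2)"
  using assms by (simp add: a_minus_def r_distr minus_add a_ac)

lemma h_msub:
  assumes "a \<in> carrier R" "c \<in> carrier R" "r \<in> carrier R" "y \<in> carrier R"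
  shows "a \<otimes> (c \<otimes> r) \<ominus> c \<otimes> y = c \<otimes> (a \<otimes> r \<ominus> y)"
  using assms by (simp add: a_minus_def r_distr r_minus m_lcomm)

lemma h_cancel:
  assumes "j \<in> carrier R" "k \<in> carrier R"
  shows "(j \<oplus> k) \<ominus> k = j"
  using assms by (simp add: a_minus_def a_assoc r_neg)

lemma h_sub2:
  assumes "a \<in> carrier R" "r \<in> carrier R" "r' \<in> carrier R" "k \<in> carrier R"
  shows "a \<otimes> (r \<ominus> r') = (a \<otimes> r \<ominus> k) \<ominus> (a \<otimes> r' \<ominus> k)"
  using assms by (simp add: a_minus_def r_distr r_minus minus_add a_ac r_neg1 r_neg2)

lemma h_split:
  assumes "r \<in> carrier R" "r' \<in> carrier R"
  shows "r = (r \<ominus> r') \<oplus> r'"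
  using assms by (simp add: a_minus_def a_assoc l_neg)

lemma setadd_iff: "x \<in> A <+>\<^bsub>R\<^esub> B \<longleftrightarrow> (\<exists>a\<in>A. \<exists>b\<in>B. x = a \<oplus> b)"
  by (auto simp: set_add_def')

lemma ideal_diff:
  assumes "ideal J R" "x \<in> J" "y \<in> J"
  shows "x \<ominus> y \<in> J"
  using assms unfolding a_minus_def
  by (meson additive_subgroup.a_closed additive_subgroup.a_inv_closed ideal.axioms(1))

lemma conv0:
  assumes J: "ideal J R" and A: "finite A" and a: "a \<in> carrier R"
    and f: "\<And>e. e \<in> A \<Longrightarrow> f e \<in> carrier R" and h: "\<And>e. e \<in> A \<Longrightarrow> h e \<in> carrier R"
    and d: "\<And>e. e \<in> A \<Longrightarrow> a \<otimes> f e \<ominus> h e \<in> J"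
  shows "a \<otimes> (\<Oplus>e\<in>A. f e) \<ominus> (\<Oplus>e\<in>A. h e) \<in> J"
  using A f h d
proof (induction A rule: finite_induct)
  case empty
  then show ?case using a additive_subgroup.zero_closed[OF ideal.axioms(1)[OF J]] by (simp add: a_minus_def)
next
  case (insert x F)
  have c: "(\<Oplus>e\<in>F. f e) \<in> carrier R" "(\<Oplus>e\<in>F. h e) \<in> carrier R"
    using insert by (auto intro!: finsum_closed)
  have fx: "f x \<in> carrier R" "h x \<in> carrier R" using insert by auto
  have "a \<otimes> (\<Oplus>e\<in>insert x F. f e) \<ominus> (\<Oplus>e\<in>insert x F. h e)
      = a \<otimes> (f x \<oplus> (\<Oplus>e\<in>F. f e)) \<ominus> (h x \<oplus> (\<Oplus>e\<in>F. h e))"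
    using insert by (simp add: finsum_insert Pi_def)
  also have "\<dots> = (a \<otimes> f x \<ominus> h x) \<oplus> (a \<otimes> (\<Oplus>e\<in>F. f e) \<ominus> (\<Oplus>e\<in>F. h e))"
    by (rule h_addsub[OF a fx(1) c(1) fx(2) c(2)])
  also have "\<dots> \<in> J"
    using insert additive_subgroup.a_closed[OF ideal.axioms(1)[OF J]] by simp
  finally show ?case .
qed

lemma conv1:
  assumes J: "ideal J R" and A: "finite A" and a: "a \<in> carrier R"
    and c: "\<And>e. e \<in> A \<Longrightarrow> c e \<in> carrier R" and r: "\<And>e. e \<in> A \<Longrightarrow> r e \<in> carrier R"
    and y: "\<And>e. e \<in> A \<Longrightarrow> y e \<in> carrier R"
    and d: "\<And>e. e \<in> A \<Longrightarrow> a \<otimes> r e \<ominus> y e \<in> J"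
  shows "a \<otimes> (\<Oplus>e\<in>A. c e \<otimes> r e) \<ominus> (\<Oplus>e\<in>A. c e \<otimes> y e) \<in> J"
proof (rule conv0[OF J A a])
  fix e assume e: "e \<in> A"
  show "c e \<otimes> r e \<in> carrier R" "c e \<otimes> y e \<in> carrier R" using c r y e by auto
  show "a \<otimes> (c e \<otimes> r e) \<ominus> c e \<otimes> y e \<in> J"
    unfolding h_msub[OF a c[OF e] r[OF e] y[OF e]] using d[OF e] c[OF e] ideal.I_l_closed[OF J] by blast
qed

lemma colon_ideal:
  assumes J: "ideal J R" and I: "I \<subseteq> carrier R"
  shows "ideal (ideal_colon R J I) R"
proof (rule sideal_ideal)
  show "sideal (carrier R) (ideal_colon R J I)" unfolding sideal_def ideal_colon_def
  proof (intro conjI ballI)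
    show "{r \<in> carrier R. \<forall>b\<in>I. r \<otimes> b \<in> J} \<subseteq> carrier R" by blast
    show "\<zero> \<in> {r \<in> carrier R. \<forall>b\<in>I. r \<otimes> b \<in> J}"
      using I additive_subgroup.zero_closed[OF ideal.axioms(1)[OF J]] by auto
    show "x \<oplus> y \<in> {r \<in> carrier R. \<forall>b\<in>I. r \<otimes> b \<in> J}"
      if H: "x \<in> {r \<in> carrier R. \<forall>b\<in>I. r \<otimes> b \<in> J}" "y \<in> {r \<in> carrier R. \<forall>b\<in>I. r \<otimes> b \<in> J}" for x y
      using H I additive_subgroup.a_closed[OF ideal.axioms(1)[OF J]] by (auto simp: l_distr)
    show "r \<otimes> x \<in> {r \<in> carrier R. \<forall>b\<in>I. r \<otimes> b \<in> J}"
      if H: "r \<in> carrier R" "x \<in> {r \<in> carrier R. \<forall>b\<in>I. r \<otimes> b \<in> J}" for r x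
      using H I ideal.I_l_closed[OF J] by (auto simp: m_assoc)
  qed
qed

lemma colon_gen:
  assumes Y: "ideal Y R" and G: "G \<subseteq> carrier R" and x: "x \<in> carrier R"
    and g: "\<And>f. f \<in> G \<Longrightarrow> x \<otimes> f \<in> Y"
  shows "x \<in> ideal_colon R Y (Idl G)"
proof -
  define Z where "Z = {b \<in> carrier R. x \<otimes> b \<in> Y}"
  have "sideal (carrier R) Z" unfolding sideal_def Z_def
  proof (intro conjI ballI)
    show "{b \<in> carrier R. x \<otimes> b \<in> Y} \<subseteq> carrier R" by blast
    show "\<zero> \<in> {b \<in> carrier R. x \<otimes> b \<in> Y}"
      using x additive_subgroup.zero_closed[OF ideal.axioms(1)[OF Y]] by auto
    show "u \<oplus> v \<in> {b \<in> carrier R. x \<otimes> b \<in> Y}"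
      if H: "u \<in> {b \<in> carrier R. x \<otimes> b \<in> Y}" "v \<in> {b \<in> carrier R. x \<otimes> b \<in> Y}" for u v
      using H x additive_subgroup.a_closed[OF ideal.axioms(1)[OF Y]] by (auto simp: r_distr)
    show "r \<otimes> u \<in> {b \<in> carrier R. x \<otimes> b \<in> Y}"
      if H: "r \<in> carrier R" "u \<in> {b \<in> carrier R. x \<otimes> b \<in> Y}" for r u
      using H x ideal.I_l_closed[OF Y] by (auto simp: m_lcomm)
  qed
  then have "Idl G \<subseteq> Z" using genideal_minimal[OF sideal_ideal] g G unfolding Z_def by blast
  then show ?thesis unfolding ideal_colon_def Z_def using x by blast
qed

lemma lemL:
  assumes I: "ideal I R" and J: "ideal J R" and K: "ideal K R"
    and rr: "rr \<in> ideal_colon R (J <+>\<^bsub>R\<^esub> ideal_prod R (ideal_pow R I q) K) I"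
  shows "x \<in> ideal_pow R I (Suc e) \<Longrightarrow> x \<otimes> rr \<in> J <+>\<^bsub>R\<^esub> ideal_prod R (ideal_pow R I (q + e)) K"
proof (induction e arbitrary: x)
  have rrc: "rr \<in> carrier R" using rr unfolding ideal_colon_def by blast
  {
    case 0
    then have "x \<in> I" using ipow_one[OF I] by simp
    then have "rr \<otimes> x \<in> J <+>\<^bsub>R\<^esub> ideal_prod R (ideal_pow R I q) K"
      using rr unfolding ideal_colon_def by blast
    then show ?case using rrc \<open>x \<in> I\<close> ideal.Icarr[OF I] by (simp add: m_comm)
  next
    case (Suc e)
    have YI: "ideal (J <+>\<^bsub>R\<^esub> ideal_prod R (ideal_pow R I (q + Suc e)) K) R"
      by (rule add_ideals[OF J ideal_prod_is_ideal[OF ipow_ideal[OF I] K]])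
    have "x \<in> ideal_prod R I (ideal_pow R I (Suc e))" using Suc.prems by simp
    then show ?case
    proof (induction x rule: ideal_prod.induct)
      case (prod i p)
      have ic: "i \<in> carrier R" using prod(1) ideal.Icarr[OF I] by blast
      have pc: "p \<in> carrier R" using prod(2) ideal.Icarr[OF ipow_ideal[OF I]] by blast
      have "p \<otimes> rr \<in> J <+>\<^bsub>R\<^esub> ideal_prod R (ideal_pow R I (q + e)) K" using Suc.IH prod(2) by blast
      then obtain j y where jy: "j \<in> J" "y \<in> ideal_prod R (ideal_pow R I (q + e)) K" "p \<otimes> rr = j \<oplus> y"
        unfolding setadd_iff by blast
      have jc: "j \<in> carrier R" using jy(1) ideal.Icarr[OF J] by blast
      have yc: "y \<in> carrier R" using jy(2) ideal_prod_in_carrier[OF ipow_ideal[OF I] K] by blast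
      have iI: "i \<in> ideal_pow R I 1" using prod(1) ipow_one[OF I] by simp
      have "i \<otimes> y \<in> ideal_prod R (ideal_pow R I (1 + (q + e))) K"
        by (rule ipowK_mult[OF I K iI jy(2)])
      then have iy: "i \<otimes> y \<in> ideal_prod R (ideal_pow R I (q + Suc e)) K" by simp
      have ij: "i \<otimes> j \<in> J" using ideal.I_l_closed[OF J jy(1) ic] .
      have "(i \<otimes> p) \<otimes> rr = i \<otimes> j \<oplus> i \<otimes> y"
        using ic pc rrc jc yc jy(3) by (simp add: m_assoc r_distr)
      then show ?case unfolding setadd_iff using ij iy by blast
    next
      case (sum s1 s2)
      have s: "s1 \<in> carrier R" "s2 \<in> carrier R"
        using sum(1,2) ideal_prod_in_carrier[OF I ipow_ideal[OF I, of "Suc e"]] by auto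
      have "(s1 \<oplus> s2) \<otimes> rr = s1 \<otimes> rr \<oplus> s2 \<otimes> rr" using s rrc by (simp add: l_distr)
      then show ?case using sum(3,4) additive_subgroup.a_closed[OF ideal.axioms(1)[OF YI]] by simp
    qed
  }
qed

end

context UP_cring
begin

lemma key:
  assumes N: "noetherian_ring R" and asc: "set as \<subseteq> carrier R" and I: "I = Idl (set as)"
    and J: "ideal J R" and K: "ideal K R"
  shows "\<exists>D. \<forall>m\<ge>D. ideal_colon R (J <+>\<^bsub>R\<^esub> ideal_prod R (ideal_pow R I (Suc m)) K) I
                 \<subseteq> ideal_colon R J I <+>\<^bsub>R\<^esub> ideal_prod R (ideal_pow R I m) K"
proof -
  define s where "s = length as"
  define IK where "IK n = ideal_prod R (ideal_pow R I n) K" for n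
  define T where "T = TT R as s"
  have Iid: "ideal I R" unfolding I by (rule R.genideal_ideal[OF asc])
  have asI: "set as \<subseteq> I" unfolding I by (rule R.genideal_self[OF asc])
  have sT: "P.subr T" and nT: "P.noeth T" using TT_props[OF N asc, of s] unfolding T_def s_def by auto
  have TRS: "T \<subseteq> RS I" unfolding T_def s_def by (rule TT_RS[OF N asc Iid asI]) simp
  have TP: "T \<subseteq> carrier P" using P.subrD(1)[OF sT] .
  have IKid: "\<And>n. ideal (IK n) R" unfolding IK_def by (rule R.ideal_prod_is_ideal[OF R.ipow_ideal[OF Iid] K])
  have IKc: "\<And>n x. x \<in> IK n \<Longrightarrow> x \<in> carrier R" by (rule ideal.Icarr[OF IKid])
  have IK0: "\<And>n. \<zero> \<in> IK n" by (rule additive_subgroup.zero_closed[OF ideal.axioms(1)[OF IKid]])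
  have IKsub: "\<And>n. IK n \<subseteq> ideal_pow R I n"
    unfolding IK_def using R.ideal_prod_inter[OF R.ipow_ideal[OF Iid] K] by blast
  have J0: "\<zero> \<in> J" by (rule additive_subgroup.zero_closed[OF ideal.axioms(1)[OF J]])
  have Jc: "\<And>x. x \<in> J \<Longrightarrow> x \<in> carrier R" by (rule ideal.Icarr[OF J])
  have aI: "as ! i \<in> I" if "i < s" for i using asI nth_mem[of i as] that unfolding s_def by blast
  have ac: "as ! i \<in> carrier R" if "i < s" for i using asc nth_mem[of i as] that unfolding s_def by blast
  have setas: "\<And>f. f \<in> set as \<Longrightarrow> \<exists>i<s. f = as ! i" unfolding s_def by (auto simp: in_set_conv_nth)
  define Gm where "Gm = {v \<in> P.vec T s. \<forall>d. (\<forall>i<s. coeff P (v i) d \<in> IK d) \<and>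
                      (\<exists>r\<in>carrier R. \<forall>i<s. (as ! i) \<otimes> r \<ominus> coeff P (v i) d \<in> J)}"
  have vecc: "\<And>v i. v \<in> P.vec T s \<Longrightarrow> v i \<in> carrier P" using P.vec_carrier[OF sT] by blast
  have smG: "P.smod T s Gm" unfolding P.smod_def
  proof (intro conjI ballI)
    show "Gm \<subseteq> P.vec T s" unfolding Gm_def by blast
    show "(\<lambda>i. \<zero>\<^bsub>P\<^esub>) \<in> Gm"
    proof -
      have "(\<lambda>i. \<zero>\<^bsub>P\<^esub>) \<in> P.vec T s" unfolding P.vec_def using P.subrD(3)[OF sT] by simp
      moreover have "\<forall>i<s. (as ! i) \<otimes> \<zero> \<ominus> coeff P \<zero>\<^bsub>P\<^esub> d \<in> J" for d
        using ac J0 by (simp add: a_minus_def)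
      ultimately show ?thesis unfolding Gm_def using IK0 by auto
    qed
    show "(\<lambda>i. v i \<oplus>\<^bsub>P\<^esub> w i) \<in> Gm" if H: "v \<in> Gm" "w \<in> Gm" for v w
    proof -
      have vv: "v \<in> P.vec T s" "w \<in> P.vec T s" using H unfolding Gm_def by auto
      have vc: "\<And>i. v i \<in> carrier P" "\<And>i. w i \<in> carrier P" using vecc vv by auto
      have "(\<lambda>i. v i \<oplus>\<^bsub>P\<^esub> w i) \<in> P.vec T s"
        using vv P.subrD(4)[OF sT] unfolding P.vec_def by auto
      moreover have "(\<forall>i<s. coeff P (v i \<oplus>\<^bsub>P\<^esub> w i) d \<in> IK d) \<and>
                      (\<exists>r\<in>carrier R. \<forall>i<s. (as ! i) \<otimes> r \<ominus> coeff P (v i \<oplus>\<^bsub>P\<^esub> w i) d \<in> J)" for d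
      proof
        show "\<forall>i<s. coeff P (v i \<oplus>\<^bsub>P\<^esub> w i) d \<in> IK d"
          using H vc additive_subgroup.a_closed[OF ideal.axioms(1)[OF IKid]] unfolding Gm_def by auto
        obtain r1 where r1: "r1 \<in> carrier R" "\<forall>i<s. (as ! i) \<otimes> r1 \<ominus> coeff P (v i) d \<in> J"
          using H(1) unfolding Gm_def by blast
        obtain r2 where r2: "r2 \<in> carrier R" "\<forall>i<s. (as ! i) \<otimes> r2 \<ominus> coeff P (w i) d \<in> J"
          using H(2) unfolding Gm_def by blast
        have "\<forall>i<s. (as ! i) \<otimes> (r1 \<oplus> r2) \<ominus> coeff P (v i \<oplus>\<^bsub>P\<^esub> w i) d \<in> J"
        proof (intro allI impI)
          fix i assume i: "i < s"
          have "(as ! i) \<otimes> (r1 \<oplus> r2) \<ominus> coeff P (v i \<oplus>\<^bsub>P\<^esub> w i) d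
              = ((as ! i) \<otimes> r1 \<ominus> coeff P (v i) d) \<oplus> ((as ! i) \<otimes> r2 \<ominus> coeff P (w i) d)"
            using vc R.h_addsub[OF ac[OF i] r1(1) r2(1)] by simp
          then show "(as ! i) \<otimes> (r1 \<oplus> r2) \<ominus> coeff P (v i \<oplus>\<^bsub>P\<^esub> w i) d \<in> J"
            using r1(2) r2(2) i additive_subgroup.a_closed[OF ideal.axioms(1)[OF J]] by simp
        qed
        then show "\<exists>r\<in>carrier R. \<forall>i<s. (as ! i) \<otimes> r \<ominus> coeff P (v i \<oplus>\<^bsub>P\<^esub> w i) d \<in> J"
          using r1(1) r2(1) by blast
      qed
      ultimately show ?thesis unfolding Gm_def by blast
    qed
    show "(\<lambda>i. t \<otimes>\<^bsub>P\<^esub> v i) \<in> Gm" if H: "t \<in> T" "v \<in> Gm" for t v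
    proof -
      have vv: "v \<in> P.vec T s" using H unfolding Gm_def by auto
      have vc: "\<And>i. v i \<in> carrier P" using vecc vv by auto
      have tc: "t \<in> carrier P" using H(1) TP by blast
      have tI: "\<And>e. coeff P t e \<in> ideal_pow R I e" using H(1) TRS unfolding RS_def by blast
      have "(\<lambda>i. t \<otimes>\<^bsub>P\<^esub> v i) \<in> P.vec T s"
        using vv H(1) P.subrD(5)[OF sT] tc unfolding P.vec_def by auto
      moreover have "(\<forall>i<s. coeff P (t \<otimes>\<^bsub>P\<^esub> v i) d \<in> IK d) \<and>
                      (\<exists>r\<in>carrier R. \<forall>i<s. (as ! i) \<otimes> r \<ominus> coeff P (t \<otimes>\<^bsub>P\<^esub> v i) d \<in> J)" for d
      proof
        have vIK: "\<And>i d. i < s \<Longrightarrow> coeff P (v i) d \<in> IK d" using H(2) unfolding Gm_def by blast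
        show "\<forall>i<s. coeff P (t \<otimes>\<^bsub>P\<^esub> v i) d \<in> IK d"
        proof (intro allI impI)
          fix i assume i: "i < s"
          have "coeff P (t \<otimes>\<^bsub>P\<^esub> v i) d = (\<Oplus>e\<in>{..d}. coeff P t e \<otimes> coeff P (v i) (d - e))"
            using tc vc by simp
          also have "\<dots> \<in> IK d"
          proof (rule R.ideal_finsum[OF IKid], simp)
            fix e assume e: "e \<in> {..d}"
            have "coeff P t e \<otimes> coeff P (v i) (d - e) \<in> IK (e + (d - e))"
              unfolding IK_def by (rule R.ipowK_mult[OF Iid K tI vIK[OF i, unfolded IK_def]])
            then show "coeff P t e \<otimes> coeff P (v i) (d - e) \<in> IK d" using e by simp
          qed
          finally show "coeff P (t \<otimes>\<^bsub>P\<^esub> v i) d \<in> IK d" .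
        qed
        have "\<forall>d'. \<exists>r. r \<in> carrier R \<and> (\<forall>i<s. (as ! i) \<otimes> r \<ominus> coeff P (v i) d' \<in> J)"
          using H(2) unfolding Gm_def by blast
        then obtain rv where rv0: "\<forall>d'. rv d' \<in> carrier R \<and> (\<forall>i<s. (as ! i) \<otimes> rv d' \<ominus> coeff P (v i) d' \<in> J)"
          by (rule choice[THEN exE]) blast
        have rv: "\<And>d'. rv d' \<in> carrier R" "\<And>d' i. i < s \<Longrightarrow> (as ! i) \<otimes> rv d' \<ominus> coeff P (v i) d' \<in> J"
          using rv0 by auto
        have "(as ! i) \<otimes> (\<Oplus>e\<in>{..d}. coeff P t e \<otimes> rv (d - e)) \<ominus> coeff P (t \<otimes>\<^bsub>P\<^esub> v i) d \<in> J"
          if i: "i < s" for i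
        proof -
          have "coeff P (t \<otimes>\<^bsub>P\<^esub> v i) d = (\<Oplus>e\<in>{..d}. coeff P t e \<otimes> coeff P (v i) (d - e))"
            using tc vc by simp
          moreover have "(as ! i) \<otimes> (\<Oplus>e\<in>{..d}. coeff P t e \<otimes> rv (d - e)) \<ominus> (\<Oplus>e\<in>{..d}. coeff P t e \<otimes> coeff P (v i) (d - e)) \<in> J"
            by (rule R.conv1[OF J _ ac[OF i]]) (use tc vc rv i in auto)
          ultimately show ?thesis by simp
        qed
        moreover have "(\<Oplus>e\<in>{..d}. coeff P t e \<otimes> rv (d - e)) \<in> carrier R"
          using tc rv by (intro R.finsum_closed) auto
        ultimately show "\<exists>r\<in>carrier R. \<forall>i<s. (as ! i) \<otimes> r \<ominus> coeff P (t \<otimes>\<^bsub>P\<^esub> v i) d \<in> J"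
          by blast
      qed
      ultimately show ?thesis unfolding Gm_def by blast
    qed
  qed
  obtain F where F: "finite F" "F \<subseteq> Gm" "Gm \<subseteq> P.vspan T F"
    using P.fg_mod[OF sT nT smG] by blast
  have FG: "\<And>g. g \<in> F \<Longrightarrow> g \<in> Gm" using F(2) by blast
  have Fv: "\<And>g. g \<in> F \<Longrightarrow> g \<in> P.vec T s" using FG unfolding Gm_def by blast
  have Fc: "\<And>g i. g \<in> F \<Longrightarrow> g i \<in> carrier P" using Fv vecc by blast
  define D where "D = Max ((\<lambda>(g, i). deg R (g i)) ` (F \<times> {..<s}) \<union> {0})"
  have degD: "deg R (g i) \<le> D" if "g \<in> F" "i < s" for g i
  proof -
    have "deg R (g i) \<in> (\<lambda>(g, i). deg R (g i)) ` (F \<times> {..<s})" using that by force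
    then show ?thesis unfolding D_def using F(1) by (intro Max_ge) auto
  qed
  define Z where "Z m = ideal_colon R J I <+>\<^bsub>R\<^esub> IK m" for m
  have Isub: "I \<subseteq> carrier R" using ideal.Icarr[OF Iid] by blast
  have colI: "ideal (ideal_colon R J I) R" by (rule R.colon_ideal[OF J Isub])
  have Zid: "\<And>m. ideal (Z m) R" unfolding Z_def by (rule R.add_ideals[OF colI IKid])
  have colZ: "x \<in> Z m" if "x \<in> ideal_colon R J I" for x m
  proof -
    have "x \<in> carrier R" using that unfolding ideal_colon_def by blast
    then have "x = x \<oplus> \<zero>" by simp
    then show ?thesis unfolding Z_def R.setadd_iff using that IK0 by blast
  qed
  have JZ: "x \<in> Z m" if H: "x \<in> J <+>\<^bsub>R\<^esub> IK m" for x m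
  proof -
    obtain j y where jy: "j \<in> J" "y \<in> IK m" "x = j \<oplus> y" using H unfolding R.setadd_iff by blast
    have "j \<in> ideal_colon R J I" unfolding ideal_colon_def
      using jy(1) Jc ideal.I_r_closed[OF J] ideal.Icarr[OF Iid] by blast
    then show ?thesis unfolding Z_def R.setadd_iff using jy by blast
  qed
  have colon_as: "x \<in> ideal_colon R Y I" if "ideal Y R" "x \<in> carrier R" "\<And>i. i < s \<Longrightarrow> (as ! i) \<otimes> x \<in> Y" for x Y
    unfolding I
  proof (rule R.colon_gen[OF that(1) asc that(2)])
    fix f assume "f \<in> set as"
    then obtain i where i: "i < s" "f = as ! i" using setas by blast
    then show "x \<otimes> f \<in> Y" using that(3)[OF i(1)] ac[OF i(1)] that(2) by (simp add: R.m_comm)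
  qed
  have main: "ideal_colon R (J <+>\<^bsub>R\<^esub> IK (Suc m)) I \<subseteq> Z m" if m: "D \<le> m" for m
  proof
    fix r assume r: "r \<in> ideal_colon R (J <+>\<^bsub>R\<^esub> IK (Suc m)) I"
    have rc: "r \<in> carrier R" using r unfolding ideal_colon_def by blast
    have rI: "\<And>b. b \<in> I \<Longrightarrow> r \<otimes> b \<in> J <+>\<^bsub>R\<^esub> IK (Suc m)" using r unfolding ideal_colon_def by blast
    define kk where "kk i = (SOME k. k \<in> IK (Suc m) \<and> (as ! i) \<otimes> r \<ominus> k \<in> J)" for i
    have kk: "kk i \<in> IK (Suc m) \<and> (as ! i) \<otimes> r \<ominus> kk i \<in> J" if i: "i < s" for i
    proof -
      obtain j k where jk: "j \<in> J" "k \<in> IK (Suc m)" "r \<otimes> (as ! i) = j \<oplus> k"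
        using rI[OF aI[OF i]] unfolding R.setadd_iff by blast
      have "(as ! i) \<otimes> r \<ominus> k = j"
        using jk(3) ac[OF i] rc R.h_cancel[OF Jc[OF jk(1)] IKc[OF jk(2)]] by (simp add: R.m_comm)
      then have "\<exists>k. k \<in> IK (Suc m) \<and> (as ! i) \<otimes> r \<ominus> k \<in> J" using jk by auto
      then show ?thesis unfolding kk_def by (rule someI_ex)
    qed
    have kkc: "\<And>i. i < s \<Longrightarrow> kk i \<in> carrier R" using kk IKc by blast
    define v where "v i = (if i < s then monom P (kk i) (Suc m) else \<zero>\<^bsub>P\<^esub>)" for i
    have vcoeff: "coeff P (v i) d = (if Suc m = d then kk i else \<zero>)" if i: "i < s" for i d
      unfolding v_def using i kkc[OF i] by simp
    have "v \<in> Gm"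
    proof -
      have "v \<in> P.vec T s" unfolding P.vec_def
      proof (intro CollectI conjI allI impI)
        fix i assume i: "i < s"
        have "kk i \<in> ideal_pow R I (Suc m)" using kk[OF i] IKsub by blast
        then have "monom P (kk i) (Suc m) \<in> T" unfolding T_def s_def by (rule monom_TT[OF N asc I])
        then show "v i \<in> T" unfolding v_def using i by simp
      next
        fix i assume "s \<le> i" then show "v i = \<zero>\<^bsub>P\<^esub>" unfolding v_def by simp
      qed
      moreover have "(\<forall>i<s. coeff P (v i) d \<in> IK d) \<and>
                      (\<exists>r\<in>carrier R. \<forall>i<s. (as ! i) \<otimes> r \<ominus> coeff P (v i) d \<in> J)" for d
      proof (cases "d = Suc m")
        case True
        then show ?thesis using vcoeff kk rc by auto
      next
        case False
        have "\<forall>i<s. (as ! i) \<otimes> \<zero> \<ominus> coeff P (v i) d \<in> J"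
          using vcoeff False ac J0 by (simp add: a_minus_def)
        then show ?thesis using vcoeff False IK0 by auto
      qed
      ultimately show ?thesis unfolding Gm_def by blast
    qed
    then have "v \<in> P.vspan T F" using F(3) by blast
    then obtain c where c: "c \<in> F \<rightarrow> T" "v = (\<lambda>i. \<Oplus>\<^bsub>P\<^esub>g\<in>F. c g \<otimes>\<^bsub>P\<^esub> g i)"
      unfolding P.vspan_def by blast
    have cT: "\<And>g. g \<in> F \<Longrightarrow> c g \<in> T" using c(1) by blast
    have cc: "\<And>g. g \<in> F \<Longrightarrow> c g \<in> carrier P" using cT TP by blast
    have cI: "coeff P (c g) e \<in> ideal_pow R I e" if g: "g \<in> F" for g e
    proof -
      have "c g \<in> RS I" using cT[OF g] TRS by blast
      then show ?thesis unfolding RS_def by blast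
    qed
    have Gmprop: "\<forall>d. (\<forall>i<s. coeff P (g i) d \<in> IK d) \<and> (\<exists>r\<in>carrier R. \<forall>i<s. (as ! i) \<otimes> r \<ominus> coeff P (g i) d \<in> J)"
      if g: "g \<in> F" for g
    proof -
      have "g \<in> Gm" using FG[OF g] .
      then show ?thesis unfolding Gm_def by (rule CollectE) (rule conjunct2)
    qed
    have gprop: "\<exists>r. r \<in> carrier R \<and> (\<forall>i<s. (as ! i) \<otimes> r \<ominus> coeff P (g i) d \<in> J)" if "g \<in> F" for g d
      using Gmprop[OF that] by blast
    define rr where "rr g d = (SOME r. r \<in> carrier R \<and> (\<forall>i<s. (as ! i) \<otimes> r \<ominus> coeff P (g i) d \<in> J))" for g d
    have rr: "rr g d \<in> carrier R \<and> (\<forall>i<s. (as ! i) \<otimes> rr g d \<ominus> coeff P (g i) d \<in> J)" if "g \<in> F" for g d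
      unfolding rr_def by (rule someI_ex[OF gprop[OF that]])
    have gIK: "coeff P (g i) d \<in> IK d" if "g \<in> F" "i < s" for g i d
      using Gmprop[OF that(1)] that(2) by blast
    define r' where "r' = (\<Oplus>g\<in>F. \<Oplus>e\<in>{..Suc m}. coeff P (c g) e \<otimes> rr g (Suc m - e))"
    have r'c: "r' \<in> carrier R" unfolding r'_def using rr cc by (auto intro!: R.finsum_closed)
    have kk_eq: "kk i = (\<Oplus>g\<in>F. \<Oplus>e\<in>{..Suc m}. coeff P (c g) e \<otimes> coeff P (g i) (Suc m - e))"
      if i: "i < s" for i
    proof -
      have "kk i = coeff P (v i) (Suc m)" using vcoeff[OF i] by simp
      also have "\<dots> = coeff P (\<Oplus>\<^bsub>P\<^esub>g\<in>F. c g \<otimes>\<^bsub>P\<^esub> g i) (Suc m)" using c(2) by simp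
      also have "\<dots> = (\<Oplus>g\<in>F. coeff P (c g \<otimes>\<^bsub>P\<^esub> g i) (Suc m))"
        by (rule coeff_finsum[OF F(1)]) (use cc Fc in auto)
      also have "\<dots> = (\<Oplus>g\<in>F. \<Oplus>e\<in>{..Suc m}. coeff P (c g) e \<otimes> coeff P (g i) (Suc m - e))"
        by (intro R.fcong) (use cc Fc in \<open>auto intro!: R.finsum_closed\<close>)
      finally show ?thesis .
    qed
    have step1: "(as ! i) \<otimes> (r \<ominus> r') \<in> J" if i: "i < s" for i
    proof -
      have "(as ! i) \<otimes> r' \<ominus> kk i \<in> J"
        unfolding kk_eq[OF i] r'_def
      proof (rule R.conv0[OF J F(1) ac[OF i]])
        fix g assume g: "g \<in> F"
        show "(\<Oplus>e\<in>{..Suc m}. coeff P (c g) e \<otimes> rr g (Suc m - e)) \<in> carrier R"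
          using rr[OF g] cc[OF g] by (auto intro!: R.finsum_closed)
        show "(\<Oplus>e\<in>{..Suc m}. coeff P (c g) e \<otimes> coeff P (g i) (Suc m - e)) \<in> carrier R"
          using Fc[OF g] cc[OF g] by (auto intro!: R.finsum_closed)
        show "(as ! i) \<otimes> (\<Oplus>e\<in>{..Suc m}. coeff P (c g) e \<otimes> rr g (Suc m - e))
              \<ominus> (\<Oplus>e\<in>{..Suc m}. coeff P (c g) e \<otimes> coeff P (g i) (Suc m - e)) \<in> J"
          by (rule R.conv1[OF J _ ac[OF i]]) (use rr[OF g] cc[OF g] Fc[OF g] i in auto)
      qed
      moreover have "(as ! i) \<otimes> r \<ominus> kk i \<in> J" using kk[OF i] by blast
      ultimately show ?thesis
        using R.h_sub2[OF ac[OF i] rc r'c kkc[OF i]] R.ideal_diff[OF J] by simp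
    qed
    have rr'col: "r \<ominus> r' \<in> ideal_colon R J I"
      by (rule colon_as[OF J]) (use rc r'c step1 in auto)
    have r'Z: "r' \<in> Z m"
      unfolding r'_def
    proof (rule R.ideal_finsum[OF Zid F(1)], rule R.ideal_finsum[OF Zid], simp)
      fix g e assume g: "g \<in> F" and e: "e \<in> {..Suc m}"
      have cge: "coeff P (c g) e \<in> carrier R" using cc[OF g] by simp
      show "coeff P (c g) e \<otimes> rr g (Suc m - e) \<in> Z m"
      proof (cases e)
        case 0
        have z: "coeff P (g i) (Suc m) = \<zero>" if i: "i < s" for i
        proof (rule deg_aboveD)
          show "deg R (g i) < Suc m" using degD[OF g i] m by simp
          show "g i \<in> carrier P" by (rule Fc[OF g])
        qed
        have rs: "rr g (Suc m) \<in> carrier R" using rr[OF g] by blast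
        have aJ: "(as ! i) \<otimes> rr g (Suc m) \<in> J" if i: "i < s" for i
        proof -
          have "(as ! i) \<otimes> rr g (Suc m) \<ominus> coeff P (g i) (Suc m) \<in> J" using rr[OF g] i by blast
          moreover have "(as ! i) \<otimes> rr g (Suc m) \<ominus> coeff P (g i) (Suc m) = (as ! i) \<otimes> rr g (Suc m)"
            unfolding z[OF i] using ac[OF i] rs by (simp add: a_minus_def)
          ultimately show ?thesis by simp
        qed
        have "rr g (Suc m) \<in> ideal_colon R J I" by (rule colon_as[OF J rs aJ])
        then have "coeff P (c g) e \<otimes> rr g (Suc m) \<in> ideal_colon R J I"
          by (rule ideal.I_l_closed[OF colI _ cge])
        then show ?thesis using colZ 0 by simp
      next
        case (Suc e')
        define q where "q = Suc m - e"
        have qe: "q + e' = m" unfolding q_def using Suc e by simp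
        have rq: "rr g q \<in> carrier R" using rr[OF g] by blast
        have aq: "(as ! i) \<otimes> rr g q \<in> J <+>\<^bsub>R\<^esub> IK q" if i: "i < s" for i
        proof -
          have cgq: "coeff P (g i) q \<in> carrier R" using Fc[OF g] by simp
          have aqc: "(as ! i) \<otimes> rr g q \<in> carrier R" using ac[OF i] rq by simp
          have eq: "(as ! i) \<otimes> rr g q = ((as ! i) \<otimes> rr g q \<ominus> coeff P (g i) q) \<oplus> coeff P (g i) q"
            by (rule R.h_split[OF aqc cgq])
          have j1: "(as ! i) \<otimes> rr g q \<ominus> coeff P (g i) q \<in> J" using rr[OF g] i by blast
          have j2: "coeff P (g i) q \<in> IK q" by (rule gIK[OF g i])
          show ?thesis unfolding R.setadd_iff using eq j1 j2 by blast
        qed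
        have "rr g q \<in> ideal_colon R (J <+>\<^bsub>R\<^esub> IK q) I"
          by (rule colon_as[OF R.add_ideals[OF J IKid] rq aq])
        then have rq2: "rr g q \<in> ideal_colon R (J <+>\<^bsub>R\<^esub> ideal_prod R (ideal_pow R I q) K) I"
          unfolding IK_def .
        have cS: "coeff P (c g) (Suc e') \<in> ideal_pow R I (Suc e')" by (rule cI[OF g])
        have "coeff P (c g) (Suc e') \<otimes> rr g q \<in> J <+>\<^bsub>R\<^esub> ideal_prod R (ideal_pow R I (q + e')) K"
          by (rule R.lemL[OF Iid J K rq2 cS])
        then have "coeff P (c g) e \<otimes> rr g q \<in> J <+>\<^bsub>R\<^esub> IK m" unfolding IK_def qe Suc .
        then have "coeff P (c g) e \<otimes> rr g q \<in> Z m" by (rule JZ)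
        then show ?thesis unfolding q_def .
      qed
    qed
    have "r = (r \<ominus> r') \<oplus> r'" by (rule R.h_split[OF rc r'c])
    also have "\<dots> \<in> Z m"
      using colZ[OF rr'col] r'Z additive_subgroup.a_closed[OF ideal.axioms(1)[OF Zid]] by blast
    finally show "r \<in> Z m" .
  qed
  show ?thesis using main unfolding Z_def IK_def by blast
qed

end

lemma (in cring) rev_incl:
  assumes I: "ideal I R" and J: "ideal J R" and K: "ideal K R"
  shows "ideal_colon R J I <+>\<^bsub>R\<^esub> ideal_prod R (ideal_pow R I m) K
          \<subseteq> ideal_colon R (J <+>\<^bsub>R\<^esub> ideal_prod R (ideal_pow R I (Suc m)) K) I"
proof
  fix x assume "x \<in> ideal_colon R J I <+>\<^bsub>R\<^esub> ideal_prod R (ideal_pow R I m) K"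
  then obtain y z where yz: "y \<in> ideal_colon R J I" "z \<in> ideal_prod R (ideal_pow R I m) K" "x = y \<oplus> z"
    unfolding setadd_iff by blast
  have yc: "y \<in> carrier R" using yz(1) unfolding ideal_colon_def by blast
  have zc: "z \<in> carrier R" using yz(2) ideal_prod_in_carrier[OF ipow_ideal[OF I] K] by blast
  have xc: "x \<in> carrier R" using yc zc yz(3) by simp
  have "x \<otimes> b \<in> J <+>\<^bsub>R\<^esub> ideal_prod R (ideal_pow R I (Suc m)) K" if b: "b \<in> I" for b
  proof -
    have bc: "b \<in> carrier R" using b ideal.Icarr[OF I] by blast
    have yb: "y \<otimes> b \<in> J" using yz(1) b unfolding ideal_colon_def by blast
    have b1: "b \<in> ideal_pow R I 1" using b ipow_one[OF I] by simp
    have "b \<otimes> z \<in> ideal_prod R (ideal_pow R I (1 + m)) K" by (rule ipowK_mult[OF I K b1 yz(2)])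
    then have zb: "z \<otimes> b \<in> ideal_prod R (ideal_pow R I (Suc m)) K" using bc zc by (simp add: m_comm)
    have "x \<otimes> b = y \<otimes> b \<oplus> z \<otimes> b" using yz(3) yc zc bc by (simp add: l_distr)
    then show ?thesis unfolding setadd_iff using yb zb by blast
  qed
  then show "x \<in> ideal_colon R (J <+>\<^bsub>R\<^esub> ideal_prod R (ideal_pow R I (Suc m)) K) I"
    unfolding ideal_colon_def using xc by blast
qed

theorem corollary2p6:
  fixes R :: "('a, 'b) ring_scheme" and I J K :: "'a set"
  assumes "cring R" and "noetherian_ring R"
    and "ideal I R" and "ideal J R" and "ideal K R"
  shows "\<exists>t::nat. t > 0 \<and> (\<forall>n\<ge>t.
     ideal_colon R (J <+>\<^bsub>R\<^esub> ideal_prod R (ideal_pow R I n) K) I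
       = ideal_colon R J I <+>\<^bsub>R\<^esub> ideal_prod R (ideal_pow R I (n - 1)) K)"
proof -
  interpret cring R by (rule assms(1))
  have U: "UP_cring R" unfolding UP_cring_def by (rule assms(1))
  obtain A where A: "A \<subseteq> carrier R" "finite A" "I = genideal R A"
    using noetherian_ring.finetely_gen[OF assms(2) assms(3)] by blast
  obtain as where as: "set as = A" using finite_list[OF A(2)] by blast
  have asc: "set as \<subseteq> carrier R" using A(1) as by simp
  have Ias: "I = genideal R (set as)" using A(3) as by simp
  obtain D where D: "\<forall>m\<ge>D. ideal_colon R (J <+>\<^bsub>R\<^esub> ideal_prod R (ideal_pow R I (Suc m)) K) I
                 \<subseteq> ideal_colon R J I <+>\<^bsub>R\<^esub> ideal_prod R (ideal_pow R I m) K"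
    using UP_cring.key[OF U assms(2) asc Ias assms(4,5)] by blast
  show ?thesis
  proof (intro exI[of _ "Suc D"] conjI allI impI)
    show "0 < Suc D" by simp
    fix n assume n: "Suc D \<le> n"
    then obtain m where m: "n = Suc m" "D \<le> m" by (cases n) auto
    show "ideal_colon R (J <+>\<^bsub>R\<^esub> ideal_prod R (ideal_pow R I n) K) I
       = ideal_colon R J I <+>\<^bsub>R\<^esub> ideal_prod R (ideal_pow R I (n - 1)) K"
      unfolding m(1) using D m(2) rev_incl[OF assms(3,4,5), of m] by auto
  qed
qed

end
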